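(* Let $\lambda>0$ be constant and let $\alpha:[-1,1]\times[0,\infty)\to\mathbb{R}^2$ be a solution of the length-penalised elastic flow $\partial_t\alpha=(k_{ss}+\frac12k^3-\lambda k)\nu$ with generalised Neumann boundary conditions in the cone. Then $$\frac{d}{dt}\int_\alpha k_s^2\,ds\le-\frac18\int_\alpha k_{s^3}^2\,ds-\frac{13}{6}\bar k^4\int_\alpha k_s^2\,ds-2\lambda\int_\alpha k_{ss}^2\,ds+14\lambda\Big(\|k-\bar k\|_\infty^2+\bar k^2\Big)\int_\alpha k_s^2\,ds$$ $$\qquad-22\bar k^3\int_\alpha(k-\bar k)k_s^2\,ds+5\int_\alpha(k-\bar k)^2k_{ss}^2\,ds+10\bar k\int_\alpha(k-\bar k)k_{ss}^2\,ds.$$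
   Context: The cone: fix $0\le\theta_2<\theta_1<2\pi$; its boundary consists of the open rays $\bar\gamma_i=\{(\rho\cos\theta_i,\rho\sin\theta_i):\rho>0\}$, $i=1,2$. The flow evolves with generalised Neumann boundary conditions: for each $t$ the curve's interior lies in the open cone between the rays, $\alpha(-1,t)\in\bar\gamma_1$, $\alpha(1,t)\in\bar\gamma_2$, the curve meets each ray perpendicularly, and $k_s(\pm1,t)=0$ (neither end reaches the cone tip). Here $s$ is arc length, $\nu$ the outer unit normal, $k=-\langle\alpha_{ss},\nu\rangle$ the scalar curvature, $k_{s^\ell}$ its $\ell$-th arc-length derivative, $L$ the length, $\bar k=\frac1L\int_\alpha k\,ds$, and $\|\cdot\|_\infty$ the sup norm over the curve. Integrals are over $\alpha(\cdot,t)$ with respect to arc length. *)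

theory Defs
  imports "HOL-Analysis.Analysis"
begin

text \<open>Planar curves are modelled in the complex plane; the inner product on complex
  numbers is the Euclidean one.  A time-dependent curve is a function
  \<open>\<alpha> :: real \<Rightarrow> real \<Rightarrow> complex\<close>, \<open>\<alpha> u t\<close>, with \<open>u \<in> [-1,1]\<close> and \<open>t \<ge> 0\<close>.\<close>

text \<open>Smoothness up to the boundary of \<open>[-1,1] \<times> [0,\<infinity>)\<close>: all partial derivatives
  (one-sided at the boundary) exist and are continuous.  D m n is the partial derivative
  of order m in u and order n in t.\<close>
definition smooth_strip :: "(real \<Rightarrow> real \<Rightarrow> complex) \<Rightarrow> bool" where
  "smooth_strip \<alpha> \<longleftrightarrow> (\<exists>D :: nat \<Rightarrow> nat \<Rightarrow> real \<Rightarrow> real \<Rightarrow> complex. D 0 0 = \<alpha> \<and>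
     (\<forall>m n. continuous_on ({-1..1} \<times> {0..}) (\<lambda>(u,t). D m n u t) \<and>
       (\<forall>u\<in>{-1..1}. \<forall>t\<in>{0..}.
          ((\<lambda>v. D m n v t) has_vector_derivative D (Suc m) n u t) (at u within {-1..1}) \<and>
          ((\<lambda>s. D m n u s) has_vector_derivative D m (Suc n) u t) (at t within {0..}))))"

definition du :: "(real \<Rightarrow> real \<Rightarrow> 'a::real_normed_vector) \<Rightarrow> real \<Rightarrow> real \<Rightarrow> 'a" where
  "du f u t = vector_derivative (\<lambda>v. f v t) (at u within {-1..1})"

definition dt :: "(real \<Rightarrow> real \<Rightarrow> 'a::real_normed_vector) \<Rightarrow> real \<Rightarrow> real \<Rightarrow> 'a" where
  "dt f u t = vector_derivative (\<lambda>s. f u s) (at t within {0..})"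

definition speed :: "(real \<Rightarrow> real \<Rightarrow> complex) \<Rightarrow> real \<Rightarrow> real \<Rightarrow> real" where
  "speed \<alpha> u t = norm (du \<alpha> u t)"

definition ds :: "(real \<Rightarrow> real \<Rightarrow> complex) \<Rightarrow> (real \<Rightarrow> real \<Rightarrow> 'a::real_normed_vector)
    \<Rightarrow> real \<Rightarrow> real \<Rightarrow> 'a" where
  "ds \<alpha> f u t = (1 / speed \<alpha> u t) *\<^sub>R du f u t"

text \<open>Unit tangent and unit normal (the tangent rotated by -90 degrees).
  The statement is invariant under the choice of sign of the normal.\<close>
definition tangent :: "(real \<Rightarrow> real \<Rightarrow> complex) \<Rightarrow> real \<Rightarrow> real \<Rightarrow> complex" where
  "tangent \<alpha> = ds \<alpha> \<alpha>"

definition normal :: "(real \<Rightarrow> real \<Rightarrow> complex) \<Rightarrow> real \<Rightarrow> real \<Rightarrow> complex" where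
  "normal \<alpha> u t = - \<i> * tangent \<alpha> u t"

definition curv :: "(real \<Rightarrow> real \<Rightarrow> complex) \<Rightarrow> real \<Rightarrow> real \<Rightarrow> real" where
  "curv \<alpha> u t = - (ds \<alpha> (ds \<alpha> \<alpha>) u t \<bullet> normal \<alpha> u t)"

definition kd :: "(real \<Rightarrow> real \<Rightarrow> complex) \<Rightarrow> nat \<Rightarrow> real \<Rightarrow> real \<Rightarrow> real" where
  "kd \<alpha> l = (ds \<alpha> ^^ l) (curv \<alpha>)"

definition lint :: "(real \<Rightarrow> real \<Rightarrow> complex) \<Rightarrow> (real \<Rightarrow> real \<Rightarrow> real) \<Rightarrow> real \<Rightarrow> real" where
  "lint \<alpha> f t = integral {-1..1} (\<lambda>u. f u t * speed \<alpha> u t)"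

definition curve_length :: "(real \<Rightarrow> real \<Rightarrow> complex) \<Rightarrow> real \<Rightarrow> real" where
  "curve_length \<alpha> t = lint \<alpha> (\<lambda>u s. 1) t"

definition kbar :: "(real \<Rightarrow> real \<Rightarrow> complex) \<Rightarrow> real \<Rightarrow> real" where
  "kbar \<alpha> t = lint \<alpha> (curv \<alpha>) t / curve_length \<alpha> t"

definition osc_sup :: "(real \<Rightarrow> real \<Rightarrow> complex) \<Rightarrow> real \<Rightarrow> real" where
  "osc_sup \<alpha> t = (SUP u\<in>{-1..1}. \<bar>curv \<alpha> u t - kbar \<alpha> t\<bar>)"

definition ray :: "real \<Rightarrow> complex set" where
  "ray \<theta> = {complex_of_real \<rho> * cis \<theta> | \<rho>. \<rho> > 0}"

definition open_cone :: "real \<Rightarrow> real \<Rightarrow> complex set" where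
  "open_cone \<theta>1 \<theta>2 = {complex_of_real \<rho> * cis \<phi> | \<rho> \<phi>. \<rho> > 0 \<and> \<theta>2 < \<phi> \<and> \<phi> < \<theta>1}"

definition elastic_cone_flow ::
  "real \<Rightarrow> real \<Rightarrow> real \<Rightarrow> (real \<Rightarrow> real \<Rightarrow> complex) \<Rightarrow> bool" where
  "elastic_cone_flow lam \<theta>1 \<theta>2 \<alpha> \<longleftrightarrow>
     smooth_strip \<alpha> \<and>
     (\<forall>u\<in>{-1..1}. \<forall>t\<in>{0..}. du \<alpha> u t \<noteq> 0) \<and>
     (\<forall>u\<in>{-1..1}. \<forall>t\<in>{0..}. dt \<alpha> u t =
        (kd \<alpha> 2 u t + curv \<alpha> u t ^ 3 / 2 - lam * curv \<alpha> u t) *\<^sub>R normal \<alpha> u t) \<and>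
     (\<forall>t\<in>{0..}.
        (\<forall>u\<in>{-1<..<1}. \<alpha> u t \<in> open_cone \<theta>1 \<theta>2) \<and>
        \<alpha> (-1) t \<in> ray \<theta>1 \<and> \<alpha> 1 t \<in> ray \<theta>2 \<and>
        tangent \<alpha> (-1) t \<bullet> cis \<theta>1 = 0 \<and> tangent \<alpha> 1 t \<bullet> cis \<theta>2 = 0 \<and>
        kd \<alpha> 1 (-1) t = 0 \<and> kd \<alpha> 1 1 t = 0)"

end

theory Submission
  imports Defs
begin

definition SS :: "(real \<times> real) set" where "SS = {-1..1} \<times> {0..}"

fun Ck :: "nat \<Rightarrow> (real \<Rightarrow> real \<Rightarrow> 'a::real_normed_vector) \<Rightarrow> bool" where
  "Ck 0 f = continuous_on SS (\<lambda>(u,t). f u t)"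
| "Ck (Suc n) f = (continuous_on SS (\<lambda>(u,t). f u t) \<and>
     (\<forall>u\<in>{-1..1}. \<forall>t\<in>{0..}. ((\<lambda>v. f v t) has_vector_derivative du f u t) (at u within {-1..1}) \<and>
        ((\<lambda>s. f u s) has_vector_derivative dt f u t) (at t within {0..})) \<and> Ck n (du f) \<and> Ck n (dt f))"

definition sm :: "(real \<Rightarrow> real \<Rightarrow> 'a::real_normed_vector) \<Rightarrow> bool" where "sm f = (\<forall>n. Ck n f)"

lemma Ck_cont: "Ck n f \<Longrightarrow> continuous_on SS (\<lambda>(u,t). f u t)"
  by (cases n) auto

lemma Ck_Suc_le: "Ck (Suc n) f \<Longrightarrow> Ck n f"
proof (induction n arbitrary: f)
  case 0 then show ?case by auto
next
  case (Suc n)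
  have "Ck n (du f)" "Ck n (dt f)" using Suc Ck.simps(2)[of "Suc n" f] by blast+
  then show ?case using Suc.prems Ck.simps(2)[of "Suc n" f] Ck.simps(2)[of n f] by blast
qed

lemma Ck_derivs:
  assumes "Ck (Suc n) f" "u \<in> {-1..1}" "t \<ge> 0"
  shows "((\<lambda>v. f v t) has_vector_derivative du f u t) (at u within {-1..1})"
    "((\<lambda>s. f u s) has_vector_derivative dt f u t) (at t within {0..})"
  using assms by auto

lemma not_bot_Ici: "t \<ge> (0::real) \<Longrightarrow> at t within {0..} \<noteq> bot"
proof -
  assume t: "t \<ge> 0"
  have "t islimpt {t..t+1}" by (subst islimpt_Icc) auto
  moreover have "{t..t+1} \<subseteq> {0..}" using t by auto
  ultimately have "t islimpt {0..}" by (rule islimpt_subset)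
  then show ?thesis by (simp add: trivial_limit_within)
qed

lemma not_bot_Icc: "u \<in> {-1..1::real} \<Longrightarrow> at u within {-1..1} \<noteq> bot"
  by (simp add: trivial_limit_within islimpt_Icc)

lemma du_unique:
  assumes "u \<in> {-1..1}" "((\<lambda>v. f v t) has_vector_derivative D) (at u within {-1..1})"
  shows "du f u t = D"
  unfolding du_def by (rule vector_derivative_within[OF not_bot_Icc[OF assms(1)] assms(2)])

lemma dt_unique:
  assumes "t \<ge> 0" "((\<lambda>s. f u s) has_vector_derivative D) (at t within {0..})"
  shows "dt f u t = D"
  unfolding dt_def by (rule vector_derivative_within[OF not_bot_Ici[OF assms(1)] assms(2)])

lemma du_cong:
  assumes "\<And>u t. u \<in> {-1..1} \<Longrightarrow> t \<ge> 0 \<Longrightarrow> f u t = g u t" "u \<in> {-1..1}" "t \<ge> 0"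
  shows "du f u t = du g u t"
proof -
  have "((\<lambda>v. f v t) has_vector_derivative D) (at u within {-1..1}) \<longleftrightarrow>
        ((\<lambda>v. g v t) has_vector_derivative D) (at u within {-1..1})" for D
  proof
    assume "((\<lambda>v. f v t) has_vector_derivative D) (at u within {-1..1})"
    then show "((\<lambda>v. g v t) has_vector_derivative D) (at u within {-1..1})"
      by (rule has_vector_derivative_transform[rotated 2]) (use assms in auto)
  next
    assume "((\<lambda>v. g v t) has_vector_derivative D) (at u within {-1..1})"
    then show "((\<lambda>v. f v t) has_vector_derivative D) (at u within {-1..1})"
      by (rule has_vector_derivative_transform[rotated 2]) (use assms in auto)
  qed
  then show ?thesis by (simp add: du_def vector_derivative_def)
qed

lemma dt_cong:
  assumes "\<And>u t. u \<in> {-1..1} \<Longrightarrow> t \<ge> 0 \<Longrightarrow> f u t = g u t" "u \<in> {-1..1}" "t \<ge> 0"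
  shows "dt f u t = dt g u t"
proof -
  have "((\<lambda>s. f u s) has_vector_derivative D) (at t within {0..}) \<longleftrightarrow>
        ((\<lambda>s. g u s) has_vector_derivative D) (at t within {0..})" for D
  proof
    assume "((\<lambda>s. f u s) has_vector_derivative D) (at t within {0..})"
    then show "((\<lambda>s. g u s) has_vector_derivative D) (at t within {0..})"
      by (rule has_vector_derivative_transform[rotated 2]) (use assms in auto)
  next
    assume "((\<lambda>s. g u s) has_vector_derivative D) (at t within {0..})"
    then show "((\<lambda>s. f u s) has_vector_derivative D) (at t within {0..})"
      by (rule has_vector_derivative_transform[rotated 2]) (use assms in auto)
  qed
  then show ?thesis by (simp add: dt_def vector_derivative_def)
qed

lemma Ck_cong:
  assumes "Ck n f" "\<And>u t. u \<in> {-1..1} \<Longrightarrow> t \<ge> 0 \<Longrightarrow> f u t = g u t"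
  shows "Ck n g"
  using assms
proof (induction n arbitrary: f g)
  case 0
  then show ?case
  proof -
    have "continuous_on SS (\<lambda>(u,t). f u t) = continuous_on SS (\<lambda>(u,t). g u t)"
      by (intro continuous_on_cong refl) (auto simp: SS_def 0(2))
    then show ?thesis using 0(1) by simp
  qed
next
  case (Suc n)
  have c: "continuous_on SS (\<lambda>(u,t). g u t)"
  proof -
    have "continuous_on SS (\<lambda>(u,t). f u t) = continuous_on SS (\<lambda>(u,t). g u t)"
      by (intro continuous_on_cong refl) (auto simp: SS_def Suc.prems(2))
    then show ?thesis using Suc.prems(1) Ck_cont by blast
  qed
  have d: "((\<lambda>v. g v t) has_vector_derivative du g u t) (at u within {-1..1}) \<and>
        ((\<lambda>s. g u s) has_vector_derivative dt g u t) (at t within {0..})"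
    if "u \<in> {-1..1}" "t \<in> {0..}" for u t
  proof
    have "((\<lambda>v. f v t) has_vector_derivative du f u t) (at u within {-1..1})"
      using Suc.prems that by auto
    then have "((\<lambda>v. g v t) has_vector_derivative du f u t) (at u within {-1..1})"
      by (rule has_vector_derivative_transform[rotated 2]) (use that Suc.prems in auto)
    then show "((\<lambda>v. g v t) has_vector_derivative du g u t) (at u within {-1..1})"
      using du_cong[of f g u t] Suc.prems that by auto
    have "((\<lambda>s. f u s) has_vector_derivative dt f u t) (at t within {0..})"
      using Suc.prems that by auto
    then have "((\<lambda>s. g u s) has_vector_derivative dt f u t) (at t within {0..})"
      by (rule has_vector_derivative_transform[rotated 2]) (use that Suc.prems in auto)
    then show "((\<lambda>s. g u s) has_vector_derivative dt g u t) (at t within {0..})"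
      using dt_cong[of f g u t] Suc.prems that by auto
  qed
  have "Ck n (du g)"
  proof -
    have "Ck n (du f)" using Suc.prems(1) by simp
    then show ?thesis using Suc.IH[of "du f" "du g"] Suc.prems(2) du_cong[of f g] by blast
  qed
  moreover have "Ck n (dt g)"
  proof -
    have "Ck n (dt f)" using Suc.prems(1) by simp
    then show ?thesis using Suc.IH[of "dt f" "dt g"] Suc.prems(2) dt_cong[of f g] by blast
  qed
  ultimately show ?case unfolding Ck.simps(2) using c d by blast
qed

lemma Ck_SucI:
  assumes "continuous_on SS (\<lambda>(u,t). h u t)"
    and "\<And>u t. u \<in> {-1..1} \<Longrightarrow> t \<ge> 0 \<Longrightarrow> ((\<lambda>v. h v t) has_vector_derivative A u t) (at u within {-1..1})"
    and "\<And>u t. u \<in> {-1..1} \<Longrightarrow> t \<ge> 0 \<Longrightarrow> ((\<lambda>s. h u s) has_vector_derivative B u t) (at t within {0..})"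
    and "Ck n A" "Ck n B"
  shows "Ck (Suc n) h"
proof -
  have eA: "du h u t = A u t" if "u \<in> {-1..1}" "t \<ge> 0" for u t
    using du_unique assms(2) that by blast
  have eB: "dt h u t = B u t" if "u \<in> {-1..1}" "t \<ge> 0" for u t
    using dt_unique assms(3) that by blast
  have "Ck n (du h)" using Ck_cong[OF assms(4), of "du h"] eA by simp
  moreover have "Ck n (dt h)" using Ck_cong[OF assms(5), of "dt h"] eB by simp
  moreover have "\<forall>u\<in>{-1..1}. \<forall>t\<in>{0..}. ((\<lambda>v. h v t) has_vector_derivative du h u t) (at u within {-1..1}) \<and>
        ((\<lambda>s. h u s) has_vector_derivative dt h u t) (at t within {0..})"
    using assms(2,3) eA eB by simp
  ultimately show ?thesis using assms(1) by simp
qed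

lemma Ck_const: "Ck n (\<lambda>u t. c)"
proof (induction n arbitrary: c)
  case 0 then show ?case by (simp add: continuous_on_const)
next
  case (Suc n)
  show ?case
    by (rule Ck_SucI[where A="\<lambda>u t. 0" and B="\<lambda>u t. 0"])
       (auto simp: continuous_on_const Suc.IH intro: has_vector_derivative_const)
qed

lemma Ck_add:
  assumes "Ck n f" "Ck n g" shows "Ck n (\<lambda>u t. f u t + g u t)"
  using assms
proof (induction n arbitrary: f g)
  case 0
  have "(\<lambda>(u,t). f u t + g u t) = (\<lambda>x. (\<lambda>(u,t). f u t) x + (\<lambda>(u,t). g u t) x)" by auto
  then show ?case using 0 by (simp add: continuous_on_add)
next
  case (Suc n)
  have c: "continuous_on SS (\<lambda>(u,t). f u t + g u t)"
  proof -
    have "(\<lambda>(u,t). f u t + g u t) = (\<lambda>x. (\<lambda>(u,t). f u t) x + (\<lambda>(u,t). g u t) x)" by auto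
    then show ?thesis using Ck_cont[OF Suc.prems(1)] Ck_cont[OF Suc.prems(2)] by (simp add: continuous_on_add)
  qed
  show ?case
  proof (rule Ck_SucI[OF c])
    fix u t :: real assume "u \<in> {-1..1}" "t \<ge> 0"
    then show "((\<lambda>v. f v t + g v t) has_vector_derivative du f u t + du g u t) (at u within {-1..1})"
      "((\<lambda>s. f u s + g u s) has_vector_derivative dt f u t + dt g u t) (at t within {0..})"
      using Ck_derivs[OF Suc.prems(1)] Ck_derivs[OF Suc.prems(2)] by (auto intro: has_vector_derivative_add)
  next
    show "Ck n (\<lambda>u t. du f u t + du g u t)" "Ck n (\<lambda>u t. dt f u t + dt g u t)"
      using Suc by auto
  qed
qed

lemma Ck_linear:
  fixes L :: "'a::real_normed_vector \<Rightarrow> 'b::real_normed_vector"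
  assumes "bounded_linear L" "Ck n f" shows "Ck n (\<lambda>u t. L (f u t))"
  using assms(2)
proof (induction n arbitrary: f)
  case 0
  have "(\<lambda>(u,t). L (f u t)) = (\<lambda>x. L ((\<lambda>(u,t). f u t) x))" by auto
  then show ?case using 0 bounded_linear.continuous_on[OF assms(1)] by simp
next
  case (Suc n)
  have c: "continuous_on SS (\<lambda>(u,t). L (f u t))"
  proof -
    have "(\<lambda>(u,t). L (f u t)) = (\<lambda>x. L ((\<lambda>(u,t). f u t) x))" by auto
    then show ?thesis using Ck_cont[OF Suc.prems(1)] bounded_linear.continuous_on[OF assms(1)] by simp
  qed
  show ?case
  proof (rule Ck_SucI[OF c])
    fix u t :: real assume "u \<in> {-1..1}" "t \<ge> 0"
    then show "((\<lambda>v. L (f v t)) has_vector_derivative L (du f u t)) (at u within {-1..1})"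
      "((\<lambda>s. L (f u s)) has_vector_derivative L (dt f u t)) (at t within {0..})"
      using Ck_derivs[OF Suc.prems(1)] bounded_linear.has_vector_derivative[OF assms(1)] by auto
  next
    show "Ck n (\<lambda>u t. L (du f u t))" "Ck n (\<lambda>u t. L (dt f u t))"
      using Suc by auto
  qed
qed

lemma Ck_bilinear:
  fixes prod :: "'a::real_normed_vector \<Rightarrow> 'b::real_normed_vector \<Rightarrow> 'c::real_normed_vector"
  assumes "bounded_bilinear prod" "Ck n f" "Ck n g" shows "Ck n (\<lambda>u t. prod (f u t) (g u t))"
  using assms(2,3)
proof (induction n arbitrary: f g)
  case 0
  have "(\<lambda>(u,t). prod (f u t) (g u t)) = (\<lambda>x. prod ((\<lambda>(u,t). f u t) x) ((\<lambda>(u,t). g u t) x))" by auto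
  then show ?case using 0 bounded_bilinear.continuous_on[OF assms(1)] by simp
next
  case (Suc n)
  have c: "continuous_on SS (\<lambda>(u,t). prod (f u t) (g u t))"
  proof -
    have "(\<lambda>(u,t). prod (f u t) (g u t)) = (\<lambda>x. prod ((\<lambda>(u,t). f u t) x) ((\<lambda>(u,t). g u t) x))" by auto
    then show ?thesis using Ck_cont[OF Suc.prems(1)] Ck_cont[OF Suc.prems(2)]
        bounded_bilinear.continuous_on[OF assms(1)] by simp
  qed
  show ?case
  proof (rule Ck_SucI[OF c])
    fix u t :: real assume "u \<in> {-1..1}" "t \<ge> 0"
    note ut = this
    show "((\<lambda>v. prod (f v t) (g v t)) has_vector_derivative
          prod (f u t) (du g u t) + prod (du f u t) (g u t)) (at u within {-1..1})"
      by (rule bounded_bilinear.has_vector_derivative[OF assms(1)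
            Ck_derivs(1)[OF Suc.prems(1) ut] Ck_derivs(1)[OF Suc.prems(2) ut]])
    show "((\<lambda>s. prod (f u s) (g u s)) has_vector_derivative
          prod (f u t) (dt g u t) + prod (dt f u t) (g u t)) (at t within {0..})"
      by (rule bounded_bilinear.has_vector_derivative[OF assms(1)
            Ck_derivs(2)[OF Suc.prems(1) ut] Ck_derivs(2)[OF Suc.prems(2) ut]])
  next
    have f: "Ck n f" "Ck n g" using Suc.prems Ck_Suc_le by blast+
    have d: "Ck n (du f)" "Ck n (du g)" "Ck n (dt f)" "Ck n (dt g)" using Suc.prems by auto
    show "Ck n (\<lambda>u t. prod (f u t) (du g u t) + prod (du f u t) (g u t))"
      "Ck n (\<lambda>u t. prod (f u t) (dt g u t) + prod (dt f u t) (g u t))"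
      using f d Suc.IH by (auto intro!: Ck_add)
  qed
qed

lemma Ck_mult: "Ck n f \<Longrightarrow> Ck n g \<Longrightarrow> Ck n (\<lambda>u t. f u t * (g u t :: 'a::real_normed_algebra))"
  by (rule Ck_bilinear[OF bounded_bilinear_mult])
lemma Ck_scaleR: "Ck n f \<Longrightarrow> Ck n g \<Longrightarrow> Ck n (\<lambda>u t. f u t *\<^sub>R g u t)"
  by (rule Ck_bilinear[OF bounded_bilinear_scaleR])
lemma Ck_inner: "Ck n f \<Longrightarrow> Ck n g \<Longrightarrow> Ck n (\<lambda>u t. inner (f u t) (g u t))"
  by (rule Ck_bilinear[OF bounded_bilinear_inner])
lemma Ck_minus: assumes "Ck n f" shows "Ck n (\<lambda>u t. - f u t)"
  using Ck_linear[OF bounded_linear_minus[OF bounded_linear_ident] assms] by simp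
lemma Ck_diff: assumes "Ck n f" "Ck n g" shows "Ck n (\<lambda>u t. f u t - g u t)"
  using Ck_add[OF assms(1) Ck_minus[OF assms(2)]] by simp

lemma Ck_inverse:
  fixes f :: "real \<Rightarrow> real \<Rightarrow> real"
  assumes "Ck n f" "\<And>u t. u \<in> {-1..1} \<Longrightarrow> t \<ge> 0 \<Longrightarrow> f u t \<noteq> 0"
  shows "Ck n (\<lambda>u t. inverse (f u t))"
  using assms
proof (induction n arbitrary: f)
  case 0
  have nz: "(\<lambda>(u,t). f u t) x \<noteq> 0" if "x \<in> SS" for x
  proof -
    obtain u t where "x = (u,t)" "u \<in> {-1..1}" "t \<ge> 0" using \<open>x \<in> SS\<close> by (auto simp: SS_def)
    then show ?thesis using 0(2) by simp
  qed
  have "continuous_on SS (\<lambda>x. inverse ((\<lambda>(u,t). f u t) x))"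
    by (rule continuous_on_inverse) (use 0(1) nz in auto)
  moreover have "(\<lambda>(u,t). inverse (f u t)) = (\<lambda>x. inverse ((\<lambda>(u,t). f u t) x))" by auto
  ultimately show ?case by simp
next
  case (Suc n)
  have nz: "(\<lambda>(u,t). f u t) x \<noteq> 0" if "x \<in> SS" for x
  proof -
    obtain u t where "x = (u,t)" "u \<in> {-1..1}" "t \<ge> 0" using \<open>x \<in> SS\<close> by (auto simp: SS_def)
    then show ?thesis using Suc.prems(2) by simp
  qed
  have c: "continuous_on SS (\<lambda>(u,t). inverse (f u t))"
  proof -
    have "continuous_on SS (\<lambda>x. inverse ((\<lambda>(u,t). f u t) x))"
      by (rule continuous_on_inverse) (use Ck_cont[OF Suc.prems(1)] nz in auto)
    moreover have "(\<lambda>(u,t). inverse (f u t)) = (\<lambda>x. inverse ((\<lambda>(u,t). f u t) x))" by auto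
    ultimately show ?thesis by simp
  qed
  have f: "Ck n f" using Suc.prems(1) Ck_Suc_le by blast
  have d: "Ck n (du f)" "Ck n (dt f)" using Suc.prems(1) by auto
  have i: "Ck n (\<lambda>u t. inverse (f u t))" using Suc.IH[OF f Suc.prems(2)] by blast
  show ?case
  proof (rule Ck_SucI[OF c])
    fix u t :: real assume ut: "u \<in> {-1..1}" "t \<ge> 0"
    have "((\<lambda>v. f v t) has_real_derivative du f u t) (at u within {-1..1})"
      using Ck_derivs(1)[OF Suc.prems(1) ut] by (simp add: has_real_derivative_iff_has_vector_derivative)
    from DERIV_inverse_fun[OF this Suc.prems(2)[OF ut]]
    show "((\<lambda>v. inverse (f v t)) has_vector_derivative - (du f u t * (inverse (f u t) * inverse (f u t)))) (at u within {-1..1})"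
      by (simp add: has_real_derivative_iff_has_vector_derivative[symmetric] power2_eq_square)
    have "((\<lambda>s. f u s) has_real_derivative dt f u t) (at t within {0..})"
      using Ck_derivs(2)[OF Suc.prems(1) ut] by (simp add: has_real_derivative_iff_has_vector_derivative)
    from DERIV_inverse_fun[OF this Suc.prems(2)[OF ut]]
    show "((\<lambda>s. inverse (f u s)) has_vector_derivative - (dt f u t * (inverse (f u t) * inverse (f u t)))) (at t within {0..})"
      by (simp add: has_real_derivative_iff_has_vector_derivative[symmetric] power2_eq_square)
  next
    show "Ck n (\<lambda>u t. - (du f u t * (inverse (f u t) * inverse (f u t))))"
      "Ck n (\<lambda>u t. - (dt f u t * (inverse (f u t) * inverse (f u t))))"
      by (intro Ck_minus Ck_mult d i)+
  qed
qed

lemma Ck_sqrt: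
  fixes f :: "real \<Rightarrow> real \<Rightarrow> real"
  assumes "Ck n f" "\<And>u t. u \<in> {-1..1} \<Longrightarrow> t \<ge> 0 \<Longrightarrow> f u t > 0"
  shows "Ck n (\<lambda>u t. sqrt (f u t))"
  using assms
proof (induction n arbitrary: f)
  case 0
  have "continuous_on SS (\<lambda>x. sqrt ((\<lambda>(u,t). f u t) x))"
    by (rule continuous_on_real_sqrt) (use 0 in \<open>auto simp: SS_def\<close>)
  moreover have "(\<lambda>(u,t). sqrt (f u t)) = (\<lambda>x. sqrt ((\<lambda>(u,t). f u t) x))" by auto
  ultimately show ?case by simp
next
  case (Suc n)
  have c: "continuous_on SS (\<lambda>(u,t). sqrt (f u t))"
  proof -
    have "continuous_on SS (\<lambda>x. sqrt ((\<lambda>(u,t). f u t) x))"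
      by (rule continuous_on_real_sqrt) (use Ck_cont[OF Suc.prems(1)] Suc.prems(2) in \<open>auto simp: SS_def\<close>)
    moreover have "(\<lambda>(u,t). sqrt (f u t)) = (\<lambda>x. sqrt ((\<lambda>(u,t). f u t) x))" by auto
    ultimately show ?thesis by simp
  qed
  have f: "Ck n f" using Suc.prems(1) Ck_Suc_le by blast
  have d: "Ck n (du f)" "Ck n (dt f)" using Suc.prems(1) by auto
  have i: "Ck n (\<lambda>u t. inverse (sqrt (f u t)))"
  proof (rule Ck_inverse[OF Suc.IH[OF f Suc.prems(2)]])
    fix u t :: real assume "u \<in> {-1..1}" "t \<ge> 0"
    then have "f u t > 0" by (rule Suc.prems(2))
    then show "sqrt (f u t) \<noteq> 0" by simp
  qed
  show ?case
  proof (rule Ck_SucI[OF c])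
    fix u t :: real assume ut: "u \<in> {-1..1}" "t \<ge> 0"
    have p: "f u t \<noteq> 0" "f u t > 0" using Suc.prems(2)[OF ut] by auto
    have "((\<lambda>v. f v t) has_real_derivative du f u t) (at u within {-1..1})"
      using Ck_derivs(1)[OF Suc.prems(1) ut] by (simp add: has_real_derivative_iff_has_vector_derivative)
    from DERIV_chain2[OF DERIV_real_sqrt[OF p(2)] this]
    show "((\<lambda>v. sqrt (f v t)) has_vector_derivative inverse (sqrt (f u t)) / 2 * du f u t) (at u within {-1..1})"
      by (simp add: has_real_derivative_iff_has_vector_derivative[symmetric])
    have "((\<lambda>s. f u s) has_real_derivative dt f u t) (at t within {0..})"
      using Ck_derivs(2)[OF Suc.prems(1) ut] by (simp add: has_real_derivative_iff_has_vector_derivative)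
    from DERIV_chain2[OF DERIV_real_sqrt[OF p(2)] this]
    show "((\<lambda>s. sqrt (f u s)) has_vector_derivative inverse (sqrt (f u t)) / 2 * dt f u t) (at t within {0..})"
      by (simp add: has_real_derivative_iff_has_vector_derivative[symmetric])
  next
    have h: "Ck n (\<lambda>u t. inverse (sqrt (f u t)) * (1/2))" by (intro Ck_mult i Ck_const)
    show "Ck n (\<lambda>u t. inverse (sqrt (f u t)) / 2 * du f u t)"
      "Ck n (\<lambda>u t. inverse (sqrt (f u t)) / 2 * dt f u t)"
      using Ck_mult[OF h d(1)] Ck_mult[OF h d(2)] by simp_all
  qed
qed

lemma cont_slice_u:
  assumes "Ck n f" "t \<ge> 0"
  shows "continuous_on {-1..1} (\<lambda>w. f w t)"
proof -
  have "continuous_on {-1..1} (\<lambda>w. (\<lambda>(u,t). f u t) ((\<lambda>w. (w,t)) w))"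
    by (rule continuous_on_compose2[OF Ck_cont[OF assms(1)]]) (use assms(2) in \<open>auto simp: SS_def intro!: continuous_intros\<close>)
  then show ?thesis by simp
qed

lemma clairaut:
  fixes f :: "real \<Rightarrow> real \<Rightarrow> 'a::euclidean_space"
  assumes f: "Ck 2 f" and u0: "u0 \<in> {-1..1}" and t0: "t0 \<ge> 0"
  shows "dt (du f) u0 t0 = du (dt f) u0 t0"
proof -
  have f1: "Ck (Suc 0) (du f)" "Ck (Suc 0) (dt f)" using f by (auto simp: numeral_2_eq_2)
  have f2: "Ck 0 (dt (du f))" "Ck 0 (du (dt f))" using f1 by (auto simp: numeral_2_eq_2)
  have ff: "Ck (Suc 0) f" using f Ck_Suc_le by (simp add: numeral_2_eq_2)
  define p where "p w = dt (du f) w t0 - du (dt f) w t0" for w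
  have pc: "continuous_on {-1..1} p"
    unfolding p_def by (intro continuous_on_diff cont_slice_u[OF f2(1) t0] cont_slice_u[OF f2(2) t0])
  have key: "integral {-1..x} (\<lambda>w. dt (du f) w t0) = integral {-1..x} (\<lambda>w. du (dt f) w t0)"
    if x: "x \<in> {-1..1}" for x
  proof -
    have sub: "{-1..x} \<subseteq> {-1..1}" using x by auto
    have A: "f x s - f (-1) s = integral {-1..x} (\<lambda>w. du f w s)" if s: "s \<ge> 0" for s
    proof -
      have "((\<lambda>w. du f w s) has_integral f x s - f (-1) s) {-1..x}"
      proof (rule fundamental_theorem_of_calculus)
        show "-1 \<le> x" using x by auto
        fix w assume "w \<in> {-1..x}"
        then have "w \<in> {-1..1}" using sub by auto
        then show "((\<lambda>w. f w s) has_vector_derivative du f w s) (at w within {-1..x})"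
          using Ck_derivs(1)[OF ff _ s] has_vector_derivative_within_subset[OF _ sub] by blast
      qed
      then show ?thesis by (simp add: integral_unique)
    qed
    have B: "((\<lambda>s. integral (cbox (-1) x) (\<lambda>w. du f w s)) has_vector_derivative
              integral (cbox (-1) x) (\<lambda>w. dt (du f) w t0)) (at t0 within {0..})"
    proof (rule leibniz_rule_vector_derivative)
      fix s w :: real assume s: "s \<in> {0..}" and w: "w \<in> cbox (-1) x"
      then have "w \<in> {-1..1}" using sub by auto
      then show "((\<lambda>s. du f w s) has_vector_derivative dt (du f) w s) (at s within {0..})"
        using Ck_derivs(2)[OF f1(1)] s by auto
    next
      fix s :: real assume s: "s \<in> {0..}"
      have "continuous_on {-1..x} (\<lambda>w. du f w s)"
        using cont_slice_u[OF f1(1)] s continuous_on_subset[OF _ sub] by auto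
      then show "(\<lambda>w. du f w s) integrable_on cbox (-1) x"
        by (simp add: integrable_continuous_interval)
    next
      have "continuous_on ({0..} \<times> cbox (-1) x) (\<lambda>y. (\<lambda>(u,t). dt (du f) u t) ((\<lambda>(s,w). (w,s)) y))"
        by (rule continuous_on_compose2[OF f2(1)[unfolded Ck.simps]])
           (use sub in \<open>auto simp: SS_def split_beta intro!: continuous_intros\<close>)
      then show "continuous_on ({0..} \<times> cbox (-1) x) (\<lambda>(s, w). dt (du f) w s)"
        by (simp add: split_beta)
    qed (use t0 in auto)
    have C: "dt f x t0 - dt f (-1) t0 = integral {-1..x} (\<lambda>w. dt (du f) w t0)"
    proof -
      have d1: "((\<lambda>s. f x s - f (-1) s) has_vector_derivative dt f x t0 - dt f (-1) t0) (at t0 within {0..})"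
        using Ck_derivs(2)[OF ff _ t0] x by (auto intro!: has_vector_derivative_diff)
      have d2: "((\<lambda>s. f x s - f (-1) s) has_vector_derivative integral {-1..x} (\<lambda>w. dt (du f) w t0)) (at t0 within {0..})"
        using B[unfolded box_real(2)] by (rule has_vector_derivative_transform[rotated 2]) (use t0 A in auto)
      show ?thesis using vector_derivative_unique_within[OF not_bot_Ici[OF t0] d1 d2] .
    qed
    have D: "dt f x t0 - dt f (-1) t0 = integral {-1..x} (\<lambda>w. du (dt f) w t0)"
    proof -
      have "((\<lambda>w. du (dt f) w t0) has_integral dt f x t0 - dt f (-1) t0) {-1..x}"
      proof (rule fundamental_theorem_of_calculus)
        show "-1 \<le> x" using x by auto
        fix w assume "w \<in> {-1..x}"
        then have "w \<in> {-1..1}" using sub by auto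
        then show "((\<lambda>w. dt f w t0) has_vector_derivative du (dt f) w t0) (at w within {-1..x})"
          using Ck_derivs(1)[OF f1(2) _ t0] has_vector_derivative_within_subset[OF _ sub] by blast
      qed
      then show ?thesis by (simp add: integral_unique)
    qed
    show ?thesis using C D by simp
  qed
  have z: "integral {-1..x} p = 0" if "x \<in> {-1..1}" for x
  proof -
    have "continuous_on {-1..x} (\<lambda>w. dt (du f) w t0)" "continuous_on {-1..x} (\<lambda>w. du (dt f) w t0)"
      using cont_slice_u[OF f2(1) t0] cont_slice_u[OF f2(2) t0] that
      by (auto elim!: continuous_on_subset)
    then show ?thesis unfolding p_def using key[OF that]
      by (simp add: integral_diff integrable_continuous_interval)
  qed
  have "((\<lambda>x. integral {-1..x} p) has_vector_derivative p u0) (at u0 within {-1..1})"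
    by (rule integral_has_vector_derivative[OF pc u0])
  moreover have "((\<lambda>x. integral {-1..x} p) has_vector_derivative 0) (at u0 within {-1..1})"
    by (rule has_vector_derivative_transform[OF u0 z has_vector_derivative_const]) auto
  ultimately have "p u0 = 0"
    using vector_derivative_unique_within[OF not_bot_Icc[OF u0]] by blast
  then show ?thesis by (simp add: p_def)
qed

lemma sm_Ck: "sm f \<Longrightarrow> Ck n f" by (simp add: sm_def)
lemma sm_add: "sm f \<Longrightarrow> sm g \<Longrightarrow> sm (\<lambda>u t. f u t + g u t)" by (simp add: sm_def Ck_add)
lemma sm_diff: "sm f \<Longrightarrow> sm g \<Longrightarrow> sm (\<lambda>u t. f u t - g u t)" by (simp add: sm_def Ck_diff)
lemma sm_minus: "sm f \<Longrightarrow> sm (\<lambda>u t. - f u t)" by (simp add: sm_def Ck_minus)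
lemma sm_const: "sm (\<lambda>u t. c)" by (simp add: sm_def Ck_const)
lemma sm_mult: "sm f \<Longrightarrow> sm g \<Longrightarrow> sm (\<lambda>u t. f u t * (g u t :: 'a::real_normed_algebra))" by (simp add: sm_def Ck_mult)
lemma sm_scaleR: "sm f \<Longrightarrow> sm g \<Longrightarrow> sm (\<lambda>u t. f u t *\<^sub>R g u t)" by (simp add: sm_def Ck_scaleR)
lemma sm_inner: "sm f \<Longrightarrow> sm g \<Longrightarrow> sm (\<lambda>u t. inner (f u t) (g u t))" by (simp add: sm_def Ck_inner)
lemma sm_inverse: assumes "sm f" "\<And>u t. u \<in> {-1..1} \<Longrightarrow> t \<ge> 0 \<Longrightarrow> f u t \<noteq> (0::real)" shows "sm (\<lambda>u t. inverse (f u t))"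
  unfolding sm_def using Ck_inverse[OF sm_Ck[OF assms(1)] assms(2)] by blast
lemma sm_sqrt: assumes "sm f" "\<And>u t. u \<in> {-1..1} \<Longrightarrow> t \<ge> 0 \<Longrightarrow> f u t > (0::real)" shows "sm (\<lambda>u t. sqrt (f u t))"
  unfolding sm_def using Ck_sqrt[OF sm_Ck[OF assms(1)] assms(2)] by blast
lemma sm_du: "sm f \<Longrightarrow> sm (du f)"
  unfolding sm_def by (metis Ck.simps(2))
lemma sm_dt: "sm f \<Longrightarrow> sm (dt f)"
  unfolding sm_def by (metis Ck.simps(2))
lemma sm_cong: "sm f \<Longrightarrow> (\<And>u t. u \<in> {-1..1} \<Longrightarrow> t \<ge> 0 \<Longrightarrow> f u t = g u t) \<Longrightarrow> sm g"
  unfolding sm_def using Ck_cong by blast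
lemma sm_derivs:
  assumes "sm f" "u \<in> {-1..1}" "t \<ge> 0"
  shows "((\<lambda>v. f v t) has_vector_derivative du f u t) (at u within {-1..1})"
    "((\<lambda>s. f u s) has_vector_derivative dt f u t) (at t within {0..})"
  using Ck_derivs[OF sm_Ck[OF assms(1), of "Suc 0"] assms(2,3)] by auto
lemma sm_rderivs:
  fixes f :: "real \<Rightarrow> real \<Rightarrow> real"
  assumes "sm f" "u \<in> {-1..1}" "t \<ge> 0"
  shows "((\<lambda>v. f v t) has_real_derivative du f u t) (at u within {-1..1})"
    "((\<lambda>s. f u s) has_real_derivative dt f u t) (at t within {0..})"
  using sm_derivs[OF assms] by (simp_all add: has_real_derivative_iff_has_vector_derivative)
lemma sm_clairaut:
  fixes f :: "real \<Rightarrow> real \<Rightarrow> 'a::euclidean_space"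
  shows "sm f \<Longrightarrow> u \<in> {-1..1} \<Longrightarrow> t \<ge> 0 \<Longrightarrow> dt (du f) u t = du (dt f) u t"
  using clairaut sm_Ck by blast

lemma du_bil:
  fixes prod :: "'a::real_normed_vector \<Rightarrow> 'b::real_normed_vector \<Rightarrow> 'c::real_normed_vector"
  assumes "bounded_bilinear prod" "sm f" "sm g" "u \<in> {-1..1}" "t \<ge> 0"
  shows "du (\<lambda>u t. prod (f u t) (g u t)) u t = prod (f u t) (du g u t) + prod (du f u t) (g u t)"
  by (rule du_unique[where f="\<lambda>u t. prod (f u t) (g u t)", OF assms(4) bounded_bilinear.has_vector_derivative[OF assms(1)
          sm_derivs(1)[OF assms(2,4,5)] sm_derivs(1)[OF assms(3,4,5)]]])
lemma dt_bil:
  fixes prod :: "'a::real_normed_vector \<Rightarrow> 'b::real_normed_vector \<Rightarrow> 'c::real_normed_vector"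
  assumes "bounded_bilinear prod" "sm f" "sm g" "u \<in> {-1..1}" "t \<ge> 0"
  shows "dt (\<lambda>u t. prod (f u t) (g u t)) u t = prod (f u t) (dt g u t) + prod (dt f u t) (g u t)"
  by (rule dt_unique[where f="\<lambda>u t. prod (f u t) (g u t)", OF assms(5) bounded_bilinear.has_vector_derivative[OF assms(1)
          sm_derivs(2)[OF assms(2,4,5)] sm_derivs(2)[OF assms(3,4,5)]]])
lemma du_lin:
  fixes L :: "'a::real_normed_vector \<Rightarrow> 'b::real_normed_vector"
  assumes "bounded_linear L" "sm f" "u \<in> {-1..1}" "t \<ge> 0"
  shows "du (\<lambda>u t. L (f u t)) u t = L (du f u t)"
  by (rule du_unique[where f="\<lambda>u t. L (f u t)", OF assms(3) bounded_linear.has_vector_derivative[OF assms(1) sm_derivs(1)[OF assms(2-4)]]])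
lemma dt_lin:
  fixes L :: "'a::real_normed_vector \<Rightarrow> 'b::real_normed_vector"
  assumes "bounded_linear L" "sm f" "u \<in> {-1..1}" "t \<ge> 0"
  shows "dt (\<lambda>u t. L (f u t)) u t = L (dt f u t)"
  by (rule dt_unique[where f="\<lambda>u t. L (f u t)", OF assms(4) bounded_linear.has_vector_derivative[OF assms(1) sm_derivs(2)[OF assms(2-4)]]])
lemma du_const: "u \<in> {-1..1} \<Longrightarrow> du (\<lambda>u t. c) u t = 0"
  by (rule du_unique) (auto intro: has_vector_derivative_const)
lemma dt_const: "t \<ge> 0 \<Longrightarrow> dt (\<lambda>u t. c) u t = 0"
  by (rule dt_unique) (auto intro: has_vector_derivative_const)

lemma smooth_strip_sm:
  assumes "smooth_strip \<alpha>" shows "sm \<alpha>"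
proof -
  obtain D where D0: "D 0 0 = \<alpha>" and DD: "\<And>m n. continuous_on ({-1..1} \<times> {0..}) (\<lambda>(u,t). D m n u t)"
    "\<And>m n u t. u \<in> {-1..1} \<Longrightarrow> t \<in> {0..} \<Longrightarrow> ((\<lambda>v. D m n v t) has_vector_derivative D (Suc m) n u t) (at u within {-1..1})"
    "\<And>m n u t. u \<in> {-1..1} \<Longrightarrow> t \<in> {0..} \<Longrightarrow> ((\<lambda>s. D m n u s) has_vector_derivative D m (Suc n) u t) (at t within {0..})"
    using assms unfolding smooth_strip_def by blast
  have "Ck N (D m n)" for N m n
  proof (induction N arbitrary: m n)
    case 0 then show ?case using DD(1) by (simp add: SS_def)
  next
    case (Suc N)
    show ?case
      by (rule Ck_SucI[where A="D (Suc m) n" and B="D m (Suc n)"])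
         (use DD(1) in \<open>simp add: SS_def\<close>, use DD(2) in simp, use DD(3) in simp, rule Suc.IH, rule Suc.IH)
  qed
  then show ?thesis using D0 unfolding sm_def by metis
qed

lemma decomp:
  fixes T z :: complex assumes "T \<bullet> T = 1"
  shows "z = (z \<bullet> T) *\<^sub>R T + (z \<bullet> (-\<i> * T)) *\<^sub>R (-\<i> * T)"
proof -
  have h: "Re T * Re T + Im T * Im T = 1" using assms by (simp add: inner_complex_def)
  have "Re z = (Re z * Re T + Im z * Im T) * Re T + (Re z * Im T - Im z * Re T) * Im T"
    using h by algebra
  moreover have "Im z = (Re z * Re T + Im z * Im T) * Im T - (Re z * Im T - Im z * Re T) * Re T"
    using h by algebra
  ultimately show ?thesis by (simp add: complex_eq_iff inner_complex_def)
qed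

lemma N_inner: fixes T :: complex shows "(-\<i> * T) \<bullet> T = 0" "T \<bullet> (-\<i> * T) = 0" "(-\<i> * T) \<bullet> (-\<i> * T) = T \<bullet> T"
  by (simp_all add: inner_complex_def algebra_simps)

lemma ds_bil:
  fixes prod :: "'a::real_normed_vector \<Rightarrow> 'b::real_normed_vector \<Rightarrow> 'c::real_normed_vector"
  assumes "bounded_bilinear prod" "sm f" "sm g" "u \<in> {-1..1}" "t \<ge> 0"
  shows "ds \<alpha> (\<lambda>u t. prod (f u t) (g u t)) u t = prod (f u t) (ds \<alpha> g u t) + prod (ds \<alpha> f u t) (g u t)"
  by (simp add: ds_def du_bil[OF assms] scaleR_add_right
      bounded_bilinear.scaleR_right[OF assms(1)] bounded_bilinear.scaleR_left[OF assms(1)])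

lemma ds_cong:
  assumes "\<And>u t. u \<in> {-1..1} \<Longrightarrow> t \<ge> 0 \<Longrightarrow> f u t = g u t" "u \<in> {-1..1}" "t \<ge> 0"
  shows "ds \<alpha> f u t = ds \<alpha> g u t"
  using du_cong[OF assms] by (simp add: ds_def)

lemma dt_cong_fun:
  assumes "\<And>u t. u \<in> {-1..1} \<Longrightarrow> t \<ge> 0 \<Longrightarrow> f u t = g u t" "u \<in> {-1..1}" "t \<ge> 0"
  shows "dt f u t = dt g u t"
  using dt_cong[OF assms] .

lemma sm_pow: "sm f \<Longrightarrow> sm (\<lambda>u t. (f u t :: 'a::real_normed_algebra_1) ^ n)"
  by (induction n) (simp_all add: sm_const sm_mult)
lemma sm_divc: assumes "sm f" shows "sm (\<lambda>u t. (f u t :: real) / c)"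
  using sm_mult[OF assms sm_const[of "inverse c"]] by (simp add: divide_inverse)

lemma cplx1: fixes z c :: complex shows "-\<i> * (c * (-\<i> * z)) = - c * z"
  by (simp add: complex_eq_iff algebra_simps)

locale cflow =
  fixes lam th1 th2 :: real and \<alpha> :: "real \<Rightarrow> real \<Rightarrow> complex"
  assumes flow: "elastic_cone_flow lam th1 th2 \<alpha>"
begin

definition FF :: "real \<Rightarrow> real \<Rightarrow> real" where
  "FF = (\<lambda>u t. kd \<alpha> 2 u t + curv \<alpha> u t ^ 3 / 2 - lam * curv \<alpha> u t)"

lemma sm_alpha: "sm \<alpha>" using flow smooth_strip_sm by (simp add: elastic_cone_flow_def)
lemma du_nz: "u \<in> {-1..1} \<Longrightarrow> t \<ge> 0 \<Longrightarrow> du \<alpha> u t \<noteq> 0"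
  using flow by (simp add: elastic_cone_flow_def)
lemma dt_alpha: "u \<in> {-1..1} \<Longrightarrow> t \<ge> 0 \<Longrightarrow> dt \<alpha> u t = FF u t *\<^sub>R normal \<alpha> u t"
  using flow by (simp add: elastic_cone_flow_def FF_def)

lemma speed_pos: "u \<in> {-1..1} \<Longrightarrow> t \<ge> 0 \<Longrightarrow> speed \<alpha> u t > 0"
  by (simp add: speed_def du_nz)
lemma speed_eq: "speed \<alpha> = (\<lambda>u t. sqrt (du \<alpha> u t \<bullet> du \<alpha> u t))"
  by (auto simp: speed_def norm_eq_sqrt_inner fun_eq_iff)
lemma sm_speed: "sm (speed \<alpha>)"
  unfolding speed_eq
  by (rule sm_sqrt[OF sm_inner[OF sm_du[OF sm_alpha] sm_du[OF sm_alpha]]]) (simp add: du_nz)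
lemma sm_ispeed: "sm (\<lambda>u t. inverse (speed \<alpha> u t))"
  by (rule sm_inverse[OF sm_speed]) (use speed_pos in force)
lemma ds_eq: "ds \<alpha> f = (\<lambda>u t. inverse (speed \<alpha> u t) *\<^sub>R du f u t)"
  by (auto simp: ds_def fun_eq_iff inverse_eq_divide)
lemma sm_ds: "sm f \<Longrightarrow> sm (ds \<alpha> f)"
  unfolding ds_eq by (rule sm_scaleR[OF sm_ispeed sm_du])
lemma sm_T: "sm (tangent \<alpha>)"
  unfolding tangent_def by (rule sm_ds[OF sm_alpha])
lemma normal_eq: "normal \<alpha> = (\<lambda>u t. -\<i> * tangent \<alpha> u t)"
  by (auto simp: fun_eq_iff normal_def)
lemma sm_N: "sm (normal \<alpha>)"
  unfolding normal_eq by (rule sm_mult[OF sm_const sm_T])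
lemma curv_eq: "curv \<alpha> = (\<lambda>u t. - (ds \<alpha> (tangent \<alpha>) u t \<bullet> normal \<alpha> u t))"
  by (auto simp: fun_eq_iff curv_def tangent_def)
lemma sm_curv: "sm (curv \<alpha>)"
  unfolding curv_eq by (rule sm_minus[OF sm_inner[OF sm_ds[OF sm_T] sm_N]])
lemma kd_Suc: "kd \<alpha> (Suc j) = ds \<alpha> (kd \<alpha> j)" by (simp add: kd_def)
lemma kd_0: "kd \<alpha> 0 = curv \<alpha>" by (simp add: kd_def)
lemma sm_kd: "sm (kd \<alpha> j)"
  by (induction j) (simp_all add: kd_0 sm_curv kd_Suc sm_ds)
lemma sm_FF: "sm FF"
  unfolding FF_def
  by (intro sm_diff sm_add sm_mult sm_const sm_kd sm_curv sm_pow sm_divc)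

lemma du_ds: "u \<in> {-1..1} \<Longrightarrow> t \<ge> 0 \<Longrightarrow> du f u t = speed \<alpha> u t *\<^sub>R ds \<alpha> f u t"
  using speed_pos[of u t] by (simp add: ds_def)

lemma du_alpha: "u \<in> {-1..1} \<Longrightarrow> t \<ge> 0 \<Longrightarrow> du \<alpha> u t = speed \<alpha> u t *\<^sub>R tangent \<alpha> u t"
  by (simp add: du_ds tangent_def)

lemma TT: "u \<in> {-1..1} \<Longrightarrow> t \<ge> 0 \<Longrightarrow> tangent \<alpha> u t \<bullet> tangent \<alpha> u t = 1"
  using du_nz[of u t]
  by (simp add: tangent_def ds_def speed_def dot_square_norm power2_eq_square)
lemma NT: "normal \<alpha> u t \<bullet> tangent \<alpha> u t = 0" "tangent \<alpha> u t \<bullet> normal \<alpha> u t = 0"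
  by (simp_all add: normal_def inner_complex_def)
lemma NN: assumes "u \<in> {-1..1}" "t \<ge> 0" shows "normal \<alpha> u t \<bullet> normal \<alpha> u t = 1"
proof -
  have "normal \<alpha> u t \<bullet> normal \<alpha> u t = tangent \<alpha> u t \<bullet> tangent \<alpha> u t"
    by (simp add: normal_def inner_complex_def)
  then show ?thesis using TT[OF assms] by simp
qed

lemma dsT_perp:
  assumes ut: "u \<in> {-1..1}" "t \<ge> 0"
  shows "ds \<alpha> (tangent \<alpha>) u t \<bullet> tangent \<alpha> u t = 0"
proof -
  have "du (\<lambda>u t. tangent \<alpha> u t \<bullet> tangent \<alpha> u t) u t = du (\<lambda>u t. 1::real) u t"
    by (rule du_cong[OF _ ut]) (simp add: TT)
  also have "\<dots> = 0" using ut by (simp add: du_const)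
  finally have "tangent \<alpha> u t \<bullet> du (tangent \<alpha>) u t + du (tangent \<alpha>) u t \<bullet> tangent \<alpha> u t = 0"
    using du_bil[OF bounded_bilinear_inner sm_T sm_T ut] by simp
  then have "du (tangent \<alpha>) u t \<bullet> tangent \<alpha> u t = 0" by (simp add: inner_commute)
  then show ?thesis by (simp add: ds_def)
qed

lemma dsT:
  assumes ut: "u \<in> {-1..1}" "t \<ge> 0"
  shows "ds \<alpha> (tangent \<alpha>) u t = (- curv \<alpha> u t) *\<^sub>R normal \<alpha> u t"
proof -
  have "ds \<alpha> (tangent \<alpha>) u t \<bullet> normal \<alpha> u t = - curv \<alpha> u t" by (simp add: curv_eq)
  then show ?thesis
    using decomp[OF TT[OF ut], of "ds \<alpha> (tangent \<alpha>) u t"] dsT_perp[OF ut]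
    by (simp add: normal_def)
qed

lemma dsN:
  assumes ut: "u \<in> {-1..1}" "t \<ge> 0"
  shows "ds \<alpha> (normal \<alpha>) u t = curv \<alpha> u t *\<^sub>R tangent \<alpha> u t"
proof -
  have "ds \<alpha> (normal \<alpha>) u t = ds \<alpha> (\<lambda>u t. -\<i> * tangent \<alpha> u t) u t"
    by (simp only: normal_eq)
  also have "\<dots> = -\<i> * ds \<alpha> (tangent \<alpha>) u t + ds \<alpha> (\<lambda>u t. -\<i>) u t * tangent \<alpha> u t"
    by (rule ds_bil[OF bounded_bilinear_mult sm_const sm_T ut])
  also have "ds \<alpha> (\<lambda>u t. -\<i>) u t = 0" using ut by (simp add: ds_def du_const)
  finally have eq: "ds \<alpha> (normal \<alpha>) u t = -\<i> * ds \<alpha> (tangent \<alpha>) u t" by simp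
  have "-\<i> * ((- curv \<alpha> u t) *\<^sub>R normal \<alpha> u t) = curv \<alpha> u t *\<^sub>R tangent \<alpha> u t"
    unfolding normal_def scaleR_conv_of_real using cplx1[of "of_real (- curv \<alpha> u t)" "tangent \<alpha> u t"] by simp
  then show ?thesis using eq dsT[OF ut] by simp
qed

end

context cflow begin

lemma speed_nz: "u \<in> {-1..1} \<Longrightarrow> t \<ge> 0 \<Longrightarrow> speed \<alpha> u t \<noteq> 0"
  using speed_pos by force

lemma dt_du_alpha:
  assumes ut: "u \<in> {-1..1}" "t \<ge> 0"
  shows "dt (du \<alpha>) u t = speed \<alpha> u t *\<^sub>R ((FF u t * curv \<alpha> u t) *\<^sub>R tangent \<alpha> u t + ds \<alpha> FF u t *\<^sub>R normal \<alpha> u t)"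
proof -
  have "dt (du \<alpha>) u t = du (dt \<alpha>) u t" by (rule sm_clairaut[OF sm_alpha ut])
  also have "\<dots> = du (\<lambda>u t. FF u t *\<^sub>R normal \<alpha> u t) u t" by (rule du_cong[OF dt_alpha ut])
  also have "\<dots> = FF u t *\<^sub>R du (normal \<alpha>) u t + du FF u t *\<^sub>R normal \<alpha> u t"
    by (rule du_bil[OF bounded_bilinear_scaleR sm_FF sm_N ut])
  also have "du (normal \<alpha>) u t = speed \<alpha> u t *\<^sub>R (curv \<alpha> u t *\<^sub>R tangent \<alpha> u t)"
    using du_ds[OF ut, of "normal \<alpha>"] dsN[OF ut] by simp
  also have "du FF u t = speed \<alpha> u t * ds \<alpha> FF u t" using du_ds[OF ut, of FF] by simp
  finally show ?thesis by (simp add: scaleR_add_right scaleR_scaleR algebra_simps)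
qed

lemma dt_speed:
  assumes ut: "u \<in> {-1..1}" "t \<ge> 0"
  shows "dt (speed \<alpha>) u t = speed \<alpha> u t * FF u t * curv \<alpha> u t"
proof -
  have e: "(\<lambda>u s. speed \<alpha> u s * speed \<alpha> u s) = (\<lambda>u s. du \<alpha> u s \<bullet> du \<alpha> u s)"
    by (auto simp: fun_eq_iff speed_def dot_square_norm power2_eq_square)
  have "speed \<alpha> u t * dt (speed \<alpha>) u t + dt (speed \<alpha>) u t * speed \<alpha> u t = dt (\<lambda>u s. du \<alpha> u s \<bullet> du \<alpha> u s) u t"
    using dt_bil[OF bounded_bilinear_mult sm_speed sm_speed ut] e by simp
  also have "\<dots> = du \<alpha> u t \<bullet> dt (du \<alpha>) u t + dt (du \<alpha>) u t \<bullet> du \<alpha> u t"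
    by (rule dt_bil[OF bounded_bilinear_inner sm_du[OF sm_alpha] sm_du[OF sm_alpha] ut])
  also have "\<dots> = 2 * (speed \<alpha> u t * speed \<alpha> u t) * FF u t * curv \<alpha> u t"
    using TT[OF ut] NT[of u t]
    by (simp add: du_alpha[OF ut] dt_du_alpha[OF ut] inner_add_right inner_add_left inner_commute algebra_simps)
  finally have "speed \<alpha> u t * (dt (speed \<alpha>) u t - speed \<alpha> u t * FF u t * curv \<alpha> u t) = 0"
    by (simp add: algebra_simps)
  then show ?thesis using speed_nz[OF ut] by simp
qed

lemma dt_ispeed:
  assumes ut: "u \<in> {-1..1}" "t \<ge> 0"
  shows "dt (\<lambda>u t. inverse (speed \<alpha> u t)) u t = - (FF u t * curv \<alpha> u t) / speed \<alpha> u t"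
proof -
  have "dt (\<lambda>u t. inverse (speed \<alpha> u t)) u t = - (dt (speed \<alpha>) u t * inverse (speed \<alpha> u t ^ Suc (Suc 0)))"
    using DERIV_inverse_fun[OF sm_rderivs(2)[OF sm_speed ut] speed_nz[OF ut]]
    by (intro dt_unique[OF ut(2)]) (simp add: has_real_derivative_iff_has_vector_derivative)
  then show ?thesis using speed_nz[OF ut] by (simp add: dt_speed[OF ut] field_simps power2_eq_square)
qed

lemma tangent_eq: "tangent \<alpha> = (\<lambda>u t. inverse (speed \<alpha> u t) *\<^sub>R du \<alpha> u t)"
  by (simp add: tangent_def ds_eq)

lemma dt_T:
  assumes ut: "u \<in> {-1..1}" "t \<ge> 0"
  shows "dt (tangent \<alpha>) u t = ds \<alpha> FF u t *\<^sub>R normal \<alpha> u t"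
proof -
  have "dt (tangent \<alpha>) u t = inverse (speed \<alpha> u t) *\<^sub>R dt (du \<alpha>) u t + dt (\<lambda>u t. inverse (speed \<alpha> u t)) u t *\<^sub>R du \<alpha> u t"
    unfolding tangent_eq by (rule dt_bil[OF bounded_bilinear_scaleR sm_ispeed sm_du[OF sm_alpha] ut])
  moreover have iv: "\<And>a. inverse (speed \<alpha> u t) * (speed \<alpha> u t * a) = a"
    using speed_nz[OF ut] by (simp add: mult.assoc[symmetric])
  ultimately show ?thesis using speed_nz[OF ut]
    by (simp add: dt_ispeed[OF ut] dt_du_alpha[OF ut] du_alpha[OF ut] scaleR_add_right scaleR_scaleR)
qed

lemma dt_N:
  assumes ut: "u \<in> {-1..1}" "t \<ge> 0"
  shows "dt (normal \<alpha>) u t = (- ds \<alpha> FF u t) *\<^sub>R tangent \<alpha> u t"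
proof -
  have "dt (normal \<alpha>) u t = dt (\<lambda>u t. -\<i> * tangent \<alpha> u t) u t"
    by (simp only: normal_eq)
  also have "\<dots> = -\<i> * dt (tangent \<alpha>) u t + dt (\<lambda>u t. -\<i>) u t * tangent \<alpha> u t"
    by (rule dt_bil[OF bounded_bilinear_mult sm_const sm_T ut])
  also have "dt (\<lambda>u t. -\<i>) u t = 0" using ut by (simp add: dt_const)
  finally have eq: "dt (normal \<alpha>) u t = -\<i> * dt (tangent \<alpha>) u t" by simp
  have "-\<i> * (ds \<alpha> FF u t *\<^sub>R normal \<alpha> u t) = (- ds \<alpha> FF u t) *\<^sub>R tangent \<alpha> u t"
    unfolding normal_def scaleR_conv_of_real using cplx1[of "of_real (ds \<alpha> FF u t)" "tangent \<alpha> u t"] by simp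
  then show ?thesis using eq dt_T[OF ut] by simp
qed

lemma commut:
  fixes f :: "real \<Rightarrow> real \<Rightarrow> 'a::euclidean_space"
  assumes f: "sm f" and ut: "u \<in> {-1..1}" "t \<ge> 0"
  shows "dt (ds \<alpha> f) u t = ds \<alpha> (dt f) u t - (curv \<alpha> u t * FF u t) *\<^sub>R ds \<alpha> f u t"
proof -
  have "dt (ds \<alpha> f) u t = inverse (speed \<alpha> u t) *\<^sub>R dt (du f) u t + dt (\<lambda>u t. inverse (speed \<alpha> u t)) u t *\<^sub>R du f u t"
    unfolding ds_eq[of f] by (rule dt_bil[OF bounded_bilinear_scaleR sm_ispeed sm_du[OF f] ut])
  also have "dt (du f) u t = du (dt f) u t" by (rule sm_clairaut[OF f ut])
  finally show ?thesis
    by (simp add: ds_eq dt_ispeed[OF ut] scaleR_scaleR divide_inverse algebra_simps)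
qed

lemma dt_curv:
  assumes ut: "u \<in> {-1..1}" "t \<ge> 0"
  shows "dt (curv \<alpha>) u t = - (ds \<alpha> (ds \<alpha> FF) u t + curv \<alpha> u t ^ 2 * FF u t)"
proof -
  have sST: "sm (ds \<alpha> (tangent \<alpha>))" by (rule sm_ds[OF sm_T])
  have "dt (curv \<alpha>) u t = - dt (\<lambda>u t. ds \<alpha> (tangent \<alpha>) u t \<bullet> normal \<alpha> u t) u t"
    unfolding curv_eq
    by (rule dt_lin[OF bounded_linear_minus[OF bounded_linear_ident] sm_inner[OF sST sm_N] ut])
  also have "dt (\<lambda>u t. ds \<alpha> (tangent \<alpha>) u t \<bullet> normal \<alpha> u t) u t =
      ds \<alpha> (tangent \<alpha>) u t \<bullet> dt (normal \<alpha>) u t + dt (ds \<alpha> (tangent \<alpha>)) u t \<bullet> normal \<alpha> u t"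
    by (rule dt_bil[OF bounded_bilinear_inner sST sm_N ut])
  also have "dt (ds \<alpha> (tangent \<alpha>)) u t = ds \<alpha> (dt (tangent \<alpha>)) u t - (curv \<alpha> u t * FF u t) *\<^sub>R ds \<alpha> (tangent \<alpha>) u t"
    by (rule commut[OF sm_T ut])
  also have "ds \<alpha> (dt (tangent \<alpha>)) u t = ds \<alpha> (\<lambda>u t. ds \<alpha> FF u t *\<^sub>R normal \<alpha> u t) u t"
    by (rule ds_cong[OF dt_T ut])
  also have "\<dots> = ds \<alpha> FF u t *\<^sub>R ds \<alpha> (normal \<alpha>) u t + ds \<alpha> (ds \<alpha> FF) u t *\<^sub>R normal \<alpha> u t"
    by (rule ds_bil[OF bounded_bilinear_scaleR sm_ds[OF sm_FF] sm_N ut])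
  finally show ?thesis
    using NT[of u t] NN[OF ut]
    by (simp add: dsN[OF ut] dsT[OF ut] dt_N[OF ut] inner_add_left inner_diff_left power2_eq_square algebra_simps)
qed

lemma dt_kd1:
  assumes ut: "u \<in> {-1..1}" "t \<ge> 0"
  shows "dt (kd \<alpha> 1) u t = ds \<alpha> (\<lambda>u t. - (ds \<alpha> (ds \<alpha> FF) u t + curv \<alpha> u t ^ 2 * FF u t)) u t
            - curv \<alpha> u t * FF u t * kd \<alpha> 1 u t"
proof -
  have k1: "kd \<alpha> 1 = ds \<alpha> (curv \<alpha>)" by (simp add: kd_def)
  show ?thesis unfolding k1
    using commut[OF sm_curv ut] ds_cong[OF dt_curv ut] by simp
qed

end

context cflow begin

definition "FsP u t = kd \<alpha> 3 u t - kd \<alpha> 1 u t * lam + 3/2 * kd \<alpha> 0 u t ^ 2 * kd \<alpha> 1 u t"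
definition "FssP u t = kd \<alpha> 4 u t - kd \<alpha> 2 u t * lam + 3 * kd \<alpha> 0 u t * kd \<alpha> 1 u t ^ 2 + 3/2 * kd \<alpha> 0 u t ^ 2 * kd \<alpha> 2 u t"
definition "ktP u t = - kd \<alpha> 4 u t + kd \<alpha> 2 u t * lam - 3 * kd \<alpha> 0 u t * kd \<alpha> 1 u t ^ 2
   - 5/2 * kd \<alpha> 0 u t ^ 2 * kd \<alpha> 2 u t + kd \<alpha> 0 u t ^ 3 * lam - 1/2 * kd \<alpha> 0 u t ^ 5"
definition "dktP u t = - kd \<alpha> 5 u t + kd \<alpha> 3 u t * lam - 3 * kd \<alpha> 1 u t ^ 3
   - 11 * kd \<alpha> 0 u t * kd \<alpha> 1 u t * kd \<alpha> 2 u t - 5/2 * kd \<alpha> 0 u t ^ 2 * kd \<alpha> 3 u t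
   + 3 * kd \<alpha> 0 u t ^ 2 * kd \<alpha> 1 u t * lam - 5/2 * kd \<alpha> 0 u t ^ 4 * kd \<alpha> 1 u t"

lemma d0:
  assumes ut: "u \<in> {-1..1}" "t \<ge> 0"
  shows "((\<lambda>w. kd \<alpha> j w t) has_real_derivative speed \<alpha> u t * kd \<alpha> (Suc j) u t) (at u within {-1..1})"
  using sm_rderivs(1)[OF sm_kd ut, of j] du_ds[OF ut, of "kd \<alpha> j"] by (simp add: kd_Suc)

lemma ds_from_deriv:
  assumes ut: "u \<in> {-1..1}" "t \<ge> 0"
    and d: "((\<lambda>w. f w t) has_real_derivative speed \<alpha> u t * Q) (at u within {-1..1})"
  shows "ds \<alpha> f u t = Q"
proof -
  have "du f u t = speed \<alpha> u t * Q"
    using d by (intro du_unique[OF ut(1)]) (simp add: has_real_derivative_iff_has_vector_derivative)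
  then show ?thesis using speed_nz[OF ut] by (simp add: ds_def)
qed

lemma FF_eq: "FF = (\<lambda>u t. kd \<alpha> 2 u t + kd \<alpha> 0 u t ^ 3 / 2 - lam * kd \<alpha> 0 u t)"
  by (simp add: FF_def kd_0)

lemma d0s:
  assumes ut: "u \<in> {-1..1}" "t \<ge> 0"
  shows "((\<lambda>w. kd \<alpha> 0 w t) has_real_derivative speed \<alpha> u t * kd \<alpha> 1 u t) (at u within {-1..1})"
    "((\<lambda>w. kd \<alpha> 1 w t) has_real_derivative speed \<alpha> u t * kd \<alpha> 2 u t) (at u within {-1..1})"
    "((\<lambda>w. kd \<alpha> 2 w t) has_real_derivative speed \<alpha> u t * kd \<alpha> 3 u t) (at u within {-1..1})"
    "((\<lambda>w. kd \<alpha> 3 w t) has_real_derivative speed \<alpha> u t * kd \<alpha> 4 u t) (at u within {-1..1})"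
    "((\<lambda>w. kd \<alpha> 4 w t) has_real_derivative speed \<alpha> u t * kd \<alpha> 5 u t) (at u within {-1..1})"
  using d0[OF ut, of 0] d0[OF ut, of 1] d0[OF ut, of 2] d0[OF ut, of 3] d0[OF ut, of 4]
  by (simp_all add: eval_nat_numeral)

lemma ds_FF:
  assumes ut: "u \<in> {-1..1}" "t \<ge> 0"
  shows "ds \<alpha> FF u t = FsP u t"
proof (rule ds_from_deriv[OF ut])
  show "((\<lambda>w. FF w t) has_real_derivative speed \<alpha> u t * FsP u t) (at u within {-1..1})"
    unfolding FF_eq FsP_def
    by (auto intro!: derivative_eq_intros d0s[OF ut] simp: algebra_simps power2_eq_square power3_eq_cube)
qed


lemma ds_FsP:
  assumes ut: "u \<in> {-1..1}" "t \<ge> 0"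
  shows "ds \<alpha> FsP u t = FssP u t"
proof (rule ds_from_deriv[OF ut])
  show "((\<lambda>w. FsP w t) has_real_derivative speed \<alpha> u t * FssP u t) (at u within {-1..1})"
    unfolding FsP_def FssP_def
    apply (rule derivative_eq_intros d0s[OF ut] refl)+
    by (simp add: field_simps eval_nat_numeral)
qed

lemma dsds_FF:
  assumes ut: "u \<in> {-1..1}" "t \<ge> 0"
  shows "ds \<alpha> (ds \<alpha> FF) u t = FssP u t"
  using ds_cong[OF ds_FF ut] ds_FsP[OF ut] by simp

lemma kt_eq:
  assumes ut: "u \<in> {-1..1}" "t \<ge> 0"
  shows "- (ds \<alpha> (ds \<alpha> FF) u t + curv \<alpha> u t ^ 2 * FF u t) = ktP u t"
  unfolding dsds_FF[OF ut] unfolding FF_eq kd_0[symmetric] FssP_def ktP_def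
  by (simp add: field_simps eval_nat_numeral)

lemma ds_kt:
  assumes ut: "u \<in> {-1..1}" "t \<ge> 0"
  shows "ds \<alpha> (\<lambda>u t. - (ds \<alpha> (ds \<alpha> FF) u t + curv \<alpha> u t ^ 2 * FF u t)) u t = dktP u t"
proof -
  have "ds \<alpha> (\<lambda>u t. - (ds \<alpha> (ds \<alpha> FF) u t + curv \<alpha> u t ^ 2 * FF u t)) u t = ds \<alpha> ktP u t"
    by (rule ds_cong[OF kt_eq ut])
  also have "\<dots> = dktP u t"
  proof (rule ds_from_deriv[OF ut])
    show "((\<lambda>w. ktP w t) has_real_derivative speed \<alpha> u t * dktP u t) (at u within {-1..1})"
      unfolding ktP_def dktP_def
      apply (rule derivative_eq_intros d0s[OF ut] refl)+
      by (simp add: field_simps eval_nat_numeral)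
  qed
  finally show ?thesis .
qed

lemma dt_K1:
  assumes ut: "u \<in> {-1..1}" "t \<ge> 0"
  shows "dt (kd \<alpha> 1) u t = dktP u t - kd \<alpha> 0 u t * FF u t * kd \<alpha> 1 u t"
  using dt_kd1[OF ut] ds_kt[OF ut] by (simp add: kd_0)

lemma poly_identity:
  fixes xa xb xc xd xe xf lm kk :: real
  shows "2 * xb * ((- xf + xd * lm - 3 * xb ^ 3 - 11 * xa * xb * xc - 5/2 * xa ^ 2 * xd
     + 3 * xa ^ 2 * xb * lm - 5/2 * xa ^ 4 * xb) - xa * (xc + xa ^ 3 / 2 - lm * xa) * xb)
     + xb ^ 2 * (xa * (xc + xa ^ 3 / 2 - lm * xa))
   = (-2 * xd^2 + 5 * (xa^2 - kk^2) * xc^2 - 5 * kk^2 * xb * xd - 5/3 * xb^4 - 11/2 * xa^4 * xb^2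
      - 2 * lm * xc^2 + 7 * lm * xa^2 * xb^2)
   + (2*xd^2 + 5*xc^2*kk^2 + 2*xc^2*lm - 2*xb*xf + 5*xb*xd*kk^2 + 2*xb*xd*lm - (13/3)*xb^4
      - 23*xa*xb^2*xc - 5*xa^2*xc^2 - 5*xa^2*xb*xd)"
  by (simp add: field_simps eval_nat_numeral)

end

lemma pw_ineq:
  fixes xa xb xc xd lm kk osc :: real
  assumes lm: "lm \<ge> 0" and w: "(xa - kk)^2 \<le> osc^2"
  shows "-2 * xd^2 + 5 * (xa^2 - kk^2) * xc^2 - 5 * kk^2 * xb * xd - 5/3 * xb^4 - 11/2 * xa^4 * xb^2
      - 2 * lm * xc^2 + 7 * lm * xa^2 * xb^2
    \<le> - 1/8 * xd^2 - 13/6 * kk^4 * xb^2 - 2 * lm * xc^2 + 14 * lm * (osc^2 + kk^2) * xb^2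
      - 22 * kk^3 * ((xa - kk) * xb^2) + 5 * ((xa - kk)^2 * xc^2) + 10 * kk * ((xa - kk) * xc^2)"
proof -
  define S where "S = 15/8 * (xd + 4/3 * kk^2 * xb)^2 + 5/3 * xb^4
     + 11/2 * (xa - kk)^2 * (2 * kk^2 + (2 * kk + (xa - kk))^2) * xb^2
     + lm * xb^2 * (14 * (osc^2 - (xa - kk)^2) + 7 * (kk - (xa - kk))^2)"
  have S0: "S \<ge> 0" unfolding S_def using lm w
    by (intro add_nonneg_nonneg mult_nonneg_nonneg) auto
  have "(- 1/8 * xd^2 - 13/6 * kk^4 * xb^2 - 2 * lm * xc^2 + 14 * lm * (osc^2 + kk^2) * xb^2
      - 22 * kk^3 * ((xa - kk) * xb^2) + 5 * ((xa - kk)^2 * xc^2) + 10 * kk * ((xa - kk) * xc^2))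
    - (-2 * xd^2 + 5 * (xa^2 - kk^2) * xc^2 - 5 * kk^2 * xb * xd - 5/3 * xb^4 - 11/2 * xa^4 * xb^2
      - 2 * lm * xc^2 + 7 * lm * xa^2 * xb^2) = S"
    unfolding S_def by (simp add: field_simps eval_nat_numeral)
  then show ?thesis using S0 by linarith
qed

context cflow begin

definition "HH u t = 2 * kd \<alpha> 1 u t * ktP u t + 2 * kd \<alpha> 2 u t * FsP u t + 2 * lam * kd \<alpha> 2 u t * kd \<alpha> 1 u t
  + kd \<alpha> 0 u t ^ 5 * kd \<alpha> 1 u t - 2 * lam * kd \<alpha> 0 u t ^ 3 * kd \<alpha> 1 u t
  - 3 * kd \<alpha> 0 u t ^ 2 * kd \<alpha> 1 u t * kd \<alpha> 2 u t + 5/3 * kd \<alpha> 0 u t * kd \<alpha> 1 u t ^ 3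
  + 5 * kbar \<alpha> t ^ 2 * kd \<alpha> 1 u t * kd \<alpha> 2 u t"

definition "dHP u t = 2 * kd \<alpha> 3 u t ^ 2 + 5 * kd \<alpha> 2 u t ^ 2 * kbar \<alpha> t ^ 2 + 2 * kd \<alpha> 2 u t ^ 2 * lam
  - 2 * kd \<alpha> 1 u t * kd \<alpha> 5 u t + 5 * kd \<alpha> 1 u t * kd \<alpha> 3 u t * kbar \<alpha> t ^ 2
  + 2 * kd \<alpha> 1 u t * kd \<alpha> 3 u t * lam - 13/3 * kd \<alpha> 1 u t ^ 4
  - 23 * kd \<alpha> 0 u t * kd \<alpha> 1 u t ^ 2 * kd \<alpha> 2 u t - 5 * kd \<alpha> 0 u t ^ 2 * kd \<alpha> 2 u t ^ 2
  - 5 * kd \<alpha> 0 u t ^ 2 * kd \<alpha> 1 u t * kd \<alpha> 3 u t"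

definition "GP u t = -2 * kd \<alpha> 3 u t ^2 + 5 * (kd \<alpha> 0 u t ^2 - kbar \<alpha> t ^2) * kd \<alpha> 2 u t ^2
  - 5 * kbar \<alpha> t ^2 * kd \<alpha> 1 u t * kd \<alpha> 3 u t - 5/3 * kd \<alpha> 1 u t ^4 - 11/2 * kd \<alpha> 0 u t ^4 * kd \<alpha> 1 u t ^2
  - 2 * lam * kd \<alpha> 2 u t ^2 + 7 * lam * kd \<alpha> 0 u t ^2 * kd \<alpha> 1 u t ^2"

lemma du_HH:
  assumes ut: "u \<in> {-1..1}" "t \<ge> 0"
  shows "((\<lambda>w. HH w t) has_real_derivative speed \<alpha> u t * dHP u t) (at u within {-1..1})"
  unfolding HH_def dHP_def ktP_def FsP_def
  apply (rule derivative_eq_intros d0s[OF ut] refl)+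
  by (simp add: field_simps eval_nat_numeral)

lemma dt_gg:
  assumes ut: "u \<in> {-1..1}" "t \<ge> 0"
  shows "dt (\<lambda>u s. kd \<alpha> 1 u s ^ 2 * speed \<alpha> u s) u t = speed \<alpha> u t * (GP u t + dHP u t)"
proof -
  have h1: "((\<lambda>s. kd \<alpha> 1 u s) has_real_derivative dktP u t - kd \<alpha> 0 u t * FF u t * kd \<alpha> 1 u t) (at t within {0..})"
    using sm_rderivs(2)[OF sm_kd ut, of 1] dt_K1[OF ut] by simp
  have h2: "((\<lambda>s. speed \<alpha> u s) has_real_derivative speed \<alpha> u t * FF u t * kd \<alpha> 0 u t) (at t within {0..})"
    using sm_rderivs(2)[OF sm_speed ut] dt_speed[OF ut] by (simp add: kd_0)
  have "((\<lambda>s. kd \<alpha> 1 u s ^ 2 * speed \<alpha> u s) has_real_derivative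
      (2 * kd \<alpha> 1 u t * (dktP u t - kd \<alpha> 0 u t * FF u t * kd \<alpha> 1 u t)) * speed \<alpha> u t
      + kd \<alpha> 1 u t ^ 2 * (speed \<alpha> u t * FF u t * kd \<alpha> 0 u t)) (at t within {0..})"
    apply (rule derivative_eq_intros h1 h2 refl)+
    by (simp add: algebra_simps)
  then have "dt (\<lambda>u s. kd \<alpha> 1 u s ^ 2 * speed \<alpha> u s) u t =
      (2 * kd \<alpha> 1 u t * (dktP u t - kd \<alpha> 0 u t * FF u t * kd \<alpha> 1 u t)) * speed \<alpha> u t
      + kd \<alpha> 1 u t ^ 2 * (speed \<alpha> u t * FF u t * kd \<alpha> 0 u t)"
    by (intro dt_unique[OF ut(2)]) (simp add: has_real_derivative_iff_has_vector_derivative)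
  also have "\<dots> = speed \<alpha> u t * (2 * kd \<alpha> 1 u t * (dktP u t - kd \<alpha> 0 u t * FF u t * kd \<alpha> 1 u t)
      + kd \<alpha> 1 u t ^ 2 * (kd \<alpha> 0 u t * FF u t))"
    by (simp add: algebra_simps)
  also have "\<dots> = speed \<alpha> u t * (GP u t + dHP u t)"
    using poly_identity[where xa="kd \<alpha> 0 u t" and xb="kd \<alpha> 1 u t" and xc="kd \<alpha> 2 u t"
      and xd="kd \<alpha> 3 u t" and xf="kd \<alpha> 5 u t" and lm=lam and kk="kbar \<alpha> t"]
    unfolding dktP_def GP_def dHP_def FF_eq by simp
  finally show ?thesis .
qed

end

context cflow begin

lemma Fs_bd_gen:
  assumes t: "t \<ge> 0" and u0: "u0 \<in> {-1..1}" and c: "c \<noteq> 0"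
    and perp: "\<And>s. s \<ge> 0 \<Longrightarrow> tangent \<alpha> u0 s \<bullet> c = 0"
  shows "FsP u0 t = 0"
proof -
  have d1: "((\<lambda>s. tangent \<alpha> u0 s \<bullet> c) has_vector_derivative dt (tangent \<alpha>) u0 t \<bullet> c) (at t within {0..})"
    by (rule bounded_linear.has_vector_derivative[OF bounded_linear_inner_left sm_derivs(2)[OF sm_T u0 t]])
  have d2: "((\<lambda>s. tangent \<alpha> u0 s \<bullet> c) has_vector_derivative 0) (at t within {0..})"
    by (rule has_vector_derivative_transform[OF _ _ has_vector_derivative_const]) (use t perp in auto)
  have "dt (tangent \<alpha>) u0 t \<bullet> c = 0"
    using vector_derivative_unique_within[OF not_bot_Ici[OF t] d1 d2] .
  then have z: "ds \<alpha> FF u0 t * (normal \<alpha> u0 t \<bullet> c) = 0"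
    by (simp add: dt_T[OF u0 t])
  have "normal \<alpha> u0 t \<bullet> c \<noteq> 0"
  proof
    assume n: "normal \<alpha> u0 t \<bullet> c = 0"
    have "c = (c \<bullet> tangent \<alpha> u0 t) *\<^sub>R tangent \<alpha> u0 t + (c \<bullet> (-\<i> * tangent \<alpha> u0 t)) *\<^sub>R (-\<i> * tangent \<alpha> u0 t)"
      by (rule decomp[OF TT[OF u0 t]])
    also have "c \<bullet> tangent \<alpha> u0 t = 0" using perp[OF t] by (simp add: inner_commute)
    also have "c \<bullet> (-\<i> * tangent \<alpha> u0 t) = 0" using n by (simp add: inner_commute normal_def)
    finally show False using c by simp
  qed
  then have "ds \<alpha> FF u0 t = 0" using z by simp
  then show ?thesis using ds_FF[OF u0 t] by simp
qed

lemma bd: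
  assumes t: "t \<ge> 0"
  shows "kd \<alpha> 1 (-1) t = 0" "kd \<alpha> 1 1 t = 0" "FsP (-1) t = 0" "FsP 1 t = 0"
proof -
  have f: "\<And>s. s \<ge> 0 \<Longrightarrow> tangent \<alpha> (-1) s \<bullet> cis th1 = 0 \<and> tangent \<alpha> 1 s \<bullet> cis th2 = 0 \<and>
      kd \<alpha> 1 (-1) s = 0 \<and> kd \<alpha> 1 1 s = 0"
    using flow by (simp add: elastic_cone_flow_def)
  show "kd \<alpha> 1 (-1) t = 0" "kd \<alpha> 1 1 t = 0" using f[OF t] by auto
  show "FsP (-1) t = 0" by (rule Fs_bd_gen[OF t, of "-1" "cis th1"]) (use f in auto)
  show "FsP 1 t = 0" by (rule Fs_bd_gen[OF t, of 1 "cis th2"]) (use f in auto)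
qed

lemma HH_bd: "t \<ge> 0 \<Longrightarrow> HH (-1) t = 0 \<and> HH 1 t = 0"
  using bd[of t] by (simp add: HH_def)

lemma cont_swap:
  assumes "Ck n f"
  shows "continuous_on ({0..} \<times> cbox (-1) 1) (\<lambda>(s, w). f w s)"
proof -
  have "continuous_on ({0..} \<times> cbox (-1) 1) (\<lambda>y. (\<lambda>(u,t). f u t) ((\<lambda>(s,w). (w,s)) y))"
    by (rule continuous_on_compose2[OF Ck_cont[OF assms]])
       (auto simp: SS_def split_beta intro!: continuous_intros)
  then show ?thesis by (simp add: split_beta)
qed

lemma main:
  assumes lam: "lam > 0" and t: "t \<ge> 0"
  shows "\<exists>D.
    ((\<lambda>s. lint \<alpha> (\<lambda>u r. (kd \<alpha> 1 u r)\<^sup>2) s) has_real_derivative D) (at t within {0..}) \<and>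
    D \<le> - 1/8 * lint \<alpha> (\<lambda>u r. (kd \<alpha> 3 u r)\<^sup>2) t
         - 13/6 * kbar \<alpha> t ^ 4 * lint \<alpha> (\<lambda>u r. (kd \<alpha> 1 u r)\<^sup>2) t
         - 2 * lam * lint \<alpha> (\<lambda>u r. (kd \<alpha> 2 u r)\<^sup>2) t
         + 14 * lam * ((osc_sup \<alpha> t)\<^sup>2 + (kbar \<alpha> t)\<^sup>2) * lint \<alpha> (\<lambda>u r. (kd \<alpha> 1 u r)\<^sup>2) t
         - 22 * kbar \<alpha> t ^ 3 * lint \<alpha> (\<lambda>u r. (curv \<alpha> u r - kbar \<alpha> r) * (kd \<alpha> 1 u r)\<^sup>2) t
         + 5 * lint \<alpha> (\<lambda>u r. (curv \<alpha> u r - kbar \<alpha> r)\<^sup>2 * (kd \<alpha> 2 u r)\<^sup>2) t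
         + 10 * kbar \<alpha> t * lint \<alpha> (\<lambda>u r. (curv \<alpha> u r - kbar \<alpha> r) * (kd \<alpha> 2 u r)\<^sup>2) t"
proof -
  define gg where "gg = (\<lambda>u s. kd \<alpha> 1 u s ^ 2 * speed \<alpha> u s)"
  have sg: "sm gg" unfolding gg_def by (intro sm_mult sm_pow sm_kd sm_speed)
  have cK: "\<And>j. continuous_on {-1..1} (\<lambda>w. kd \<alpha> j w t)"
    using cont_slice_u[OF sm_Ck[OF sm_kd] t] by blast
  have cS: "continuous_on {-1..1} (\<lambda>w. speed \<alpha> w t)"
    using cont_slice_u[OF sm_Ck[OF sm_speed] t] by blast
  have cC: "continuous_on {-1..1} (\<lambda>w. curv \<alpha> w t)"
    using cK[of 0] by (simp add: kd_0)
  define I where "I = integral {-1..1} (\<lambda>u. dt gg u t)"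
  have L: "((\<lambda>s. integral (cbox (-1) 1) (\<lambda>u. gg u s)) has_vector_derivative
            integral (cbox (-1) 1) (\<lambda>u. dt gg u t)) (at t within {0..})"
  proof (rule leibniz_rule_vector_derivative)
    fix s w :: real assume s: "s \<in> {0..}" and w: "w \<in> cbox (-1) 1"
    then show "((\<lambda>s. gg w s) has_vector_derivative dt gg w s) (at s within {0..})"
      using sm_derivs(2)[OF sg] by auto
  next
    fix s :: real assume s: "s \<in> {0..}"
    then show "(\<lambda>w. gg w s) integrable_on cbox (-1) 1"
      using cont_slice_u[OF sm_Ck[OF sg]] by (simp add: integrable_continuous_interval)
  next
    show "continuous_on ({0..} \<times> cbox (-1) 1) (\<lambda>(s, w). dt gg w s)"
      by (rule cont_swap[OF sm_Ck[OF sm_dt[OF sg]]])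
  qed (use t in auto)
  have Lr: "((\<lambda>s. lint \<alpha> (\<lambda>u r. (kd \<alpha> 1 u r)\<^sup>2) s) has_real_derivative I) (at t within {0..})"
    using L by (simp add: has_real_derivative_iff_has_vector_derivative lint_def gg_def I_def)
  have hG: "((\<lambda>u. speed \<alpha> u t * GP u t) has_integral integral {-1..1} (\<lambda>u. speed \<alpha> u t * GP u t)) {-1..1}"
    by (rule integrable_integral, rule integrable_continuous_interval)
       (unfold GP_def, intro continuous_intros cK cS)
  have hH: "((\<lambda>u. speed \<alpha> u t * dHP u t) has_integral HH 1 t - HH (-1) t) {-1..1}"
  proof (rule fundamental_theorem_of_calculus)
    fix x assume "x \<in> {-1..1::real}"
    then show "((\<lambda>w. HH w t) has_vector_derivative speed \<alpha> x t * dHP x t) (at x within {-1..1})"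
      using du_HH[of x t] t by (simp add: has_real_derivative_iff_has_vector_derivative)
  qed simp
  have hD: "((\<lambda>u. dt gg u t) has_integral integral {-1..1} (\<lambda>u. speed \<alpha> u t * GP u t)) {-1..1}"
  proof -
    have "((\<lambda>u. speed \<alpha> u t * GP u t + speed \<alpha> u t * dHP u t) has_integral
        integral {-1..1} (\<lambda>u. speed \<alpha> u t * GP u t) + 0) {-1..1}"
      using has_integral_add[OF hG hH] HH_bd[OF t] by simp
    moreover have "dt gg x t = speed \<alpha> x t * GP x t + speed \<alpha> x t * dHP x t" if "x \<in> {-1..1}" for x
      unfolding gg_def using dt_gg[OF that t] by (simp only: distrib_left)
    ultimately show ?thesis
      by (subst has_integral_cong[where g="\<lambda>u. speed \<alpha> u t * GP u t + speed \<alpha> u t * dHP u t"]) auto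
  qed
  have ID: "I = integral {-1..1} (\<lambda>u. speed \<alpha> u t * GP u t)"
    unfolding I_def using hD by (rule integral_unique)
  have h1: "((\<lambda>u. (kd \<alpha> 3 u t)\<^sup>2 * speed \<alpha> u t) has_integral lint \<alpha> (\<lambda>u r. (kd \<alpha> 3 u r)\<^sup>2) t) {-1..1}"
    unfolding lint_def by (rule integrable_integral, rule integrable_continuous_interval) (intro continuous_intros cK cS)
  have h2: "((\<lambda>u. (kd \<alpha> 1 u t)\<^sup>2 * speed \<alpha> u t) has_integral lint \<alpha> (\<lambda>u r. (kd \<alpha> 1 u r)\<^sup>2) t) {-1..1}"
    unfolding lint_def by (rule integrable_integral, rule integrable_continuous_interval) (intro continuous_intros cK cS)
  have h3: "((\<lambda>u. (kd \<alpha> 2 u t)\<^sup>2 * speed \<alpha> u t) has_integral lint \<alpha> (\<lambda>u r. (kd \<alpha> 2 u r)\<^sup>2) t) {-1..1}"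
    unfolding lint_def by (rule integrable_integral, rule integrable_continuous_interval) (intro continuous_intros cK cS)
  have h4: "((\<lambda>u. (curv \<alpha> u t - kbar \<alpha> t) * (kd \<alpha> 1 u t)\<^sup>2 * speed \<alpha> u t) has_integral
      lint \<alpha> (\<lambda>u r. (curv \<alpha> u r - kbar \<alpha> r) * (kd \<alpha> 1 u r)\<^sup>2) t) {-1..1}"
    unfolding lint_def by (rule integrable_integral, rule integrable_continuous_interval) (intro continuous_intros cK cS cC)
  have h5: "((\<lambda>u. (curv \<alpha> u t - kbar \<alpha> t)\<^sup>2 * (kd \<alpha> 2 u t)\<^sup>2 * speed \<alpha> u t) has_integral
      lint \<alpha> (\<lambda>u r. (curv \<alpha> u r - kbar \<alpha> r)\<^sup>2 * (kd \<alpha> 2 u r)\<^sup>2) t) {-1..1}"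
    unfolding lint_def by (rule integrable_integral, rule integrable_continuous_interval) (intro continuous_intros cK cS cC)
  have h6: "((\<lambda>u. (curv \<alpha> u t - kbar \<alpha> t) * (kd \<alpha> 2 u t)\<^sup>2 * speed \<alpha> u t) has_integral
      lint \<alpha> (\<lambda>u r. (curv \<alpha> u r - kbar \<alpha> r) * (kd \<alpha> 2 u r)\<^sup>2) t) {-1..1}"
    unfolding lint_def by (rule integrable_integral, rule integrable_continuous_interval) (intro continuous_intros cK cS cC)
  have hR: "((\<lambda>u. - 1/8 * ((kd \<alpha> 3 u t)\<^sup>2 * speed \<alpha> u t)
         - 13/6 * kbar \<alpha> t ^ 4 * ((kd \<alpha> 1 u t)\<^sup>2 * speed \<alpha> u t)
         - 2 * lam * ((kd \<alpha> 2 u t)\<^sup>2 * speed \<alpha> u t)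
         + 14 * lam * ((osc_sup \<alpha> t)\<^sup>2 + (kbar \<alpha> t)\<^sup>2) * ((kd \<alpha> 1 u t)\<^sup>2 * speed \<alpha> u t)
         - 22 * kbar \<alpha> t ^ 3 * ((curv \<alpha> u t - kbar \<alpha> t) * (kd \<alpha> 1 u t)\<^sup>2 * speed \<alpha> u t)
         + 5 * ((curv \<alpha> u t - kbar \<alpha> t)\<^sup>2 * (kd \<alpha> 2 u t)\<^sup>2 * speed \<alpha> u t)
         + 10 * kbar \<alpha> t * ((curv \<alpha> u t - kbar \<alpha> t) * (kd \<alpha> 2 u t)\<^sup>2 * speed \<alpha> u t)) has_integral
      (- 1/8 * lint \<alpha> (\<lambda>u r. (kd \<alpha> 3 u r)\<^sup>2) t
         - 13/6 * kbar \<alpha> t ^ 4 * lint \<alpha> (\<lambda>u r. (kd \<alpha> 1 u r)\<^sup>2) t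
         - 2 * lam * lint \<alpha> (\<lambda>u r. (kd \<alpha> 2 u r)\<^sup>2) t
         + 14 * lam * ((osc_sup \<alpha> t)\<^sup>2 + (kbar \<alpha> t)\<^sup>2) * lint \<alpha> (\<lambda>u r. (kd \<alpha> 1 u r)\<^sup>2) t
         - 22 * kbar \<alpha> t ^ 3 * lint \<alpha> (\<lambda>u r. (curv \<alpha> u r - kbar \<alpha> r) * (kd \<alpha> 1 u r)\<^sup>2) t
         + 5 * lint \<alpha> (\<lambda>u r. (curv \<alpha> u r - kbar \<alpha> r)\<^sup>2 * (kd \<alpha> 2 u r)\<^sup>2) t
         + 10 * kbar \<alpha> t * lint \<alpha> (\<lambda>u r. (curv \<alpha> u r - kbar \<alpha> r) * (kd \<alpha> 2 u r)\<^sup>2) t)) {-1..1}"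
    by (intro has_integral_add has_integral_diff has_integral_mult_right h1 h2 h3 h4 h5 h6)
  have bdd: "bdd_above ((\<lambda>u. \<bar>curv \<alpha> u t - kbar \<alpha> t\<bar>) ` {-1..1})"
  proof -
    have "compact ((\<lambda>u. \<bar>curv \<alpha> u t - kbar \<alpha> t\<bar>) ` {-1..1})"
      by (rule compact_continuous_image) (intro continuous_intros cC, simp)
    then show ?thesis by (intro bounded_imp_bdd_above compact_imp_bounded)
  qed
  have le: "speed \<alpha> u t * GP u t \<le> - 1/8 * ((kd \<alpha> 3 u t)\<^sup>2 * speed \<alpha> u t)
         - 13/6 * kbar \<alpha> t ^ 4 * ((kd \<alpha> 1 u t)\<^sup>2 * speed \<alpha> u t)
         - 2 * lam * ((kd \<alpha> 2 u t)\<^sup>2 * speed \<alpha> u t)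
         + 14 * lam * ((osc_sup \<alpha> t)\<^sup>2 + (kbar \<alpha> t)\<^sup>2) * ((kd \<alpha> 1 u t)\<^sup>2 * speed \<alpha> u t)
         - 22 * kbar \<alpha> t ^ 3 * ((curv \<alpha> u t - kbar \<alpha> t) * (kd \<alpha> 1 u t)\<^sup>2 * speed \<alpha> u t)
         + 5 * ((curv \<alpha> u t - kbar \<alpha> t)\<^sup>2 * (kd \<alpha> 2 u t)\<^sup>2 * speed \<alpha> u t)
         + 10 * kbar \<alpha> t * ((curv \<alpha> u t - kbar \<alpha> t) * (kd \<alpha> 2 u t)\<^sup>2 * speed \<alpha> u t)"
    if u: "u \<in> {-1..1}" for u
  proof -
    have a: "\<bar>curv \<alpha> u t - kbar \<alpha> t\<bar> \<le> osc_sup \<alpha> t"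
      unfolding osc_sup_def by (rule cSUP_upper[OF u bdd])
    have "\<bar>curv \<alpha> u t - kbar \<alpha> t\<bar>\<^sup>2 \<le> (osc_sup \<alpha> t)\<^sup>2"
      by (rule power_mono[OF a abs_ge_zero])
    then have o: "(kd \<alpha> 0 u t - kbar \<alpha> t)\<^sup>2 \<le> (osc_sup \<alpha> t)\<^sup>2" by (simp add: kd_0)
    have p: "GP u t \<le> - 1/8 * (kd \<alpha> 3 u t)^2 - 13/6 * (kbar \<alpha> t)^4 * (kd \<alpha> 1 u t)^2 - 2 * lam * (kd \<alpha> 2 u t)^2
        + 14 * lam * ((osc_sup \<alpha> t)^2 + (kbar \<alpha> t)^2) * (kd \<alpha> 1 u t)^2
        - 22 * (kbar \<alpha> t)^3 * ((kd \<alpha> 0 u t - kbar \<alpha> t) * (kd \<alpha> 1 u t)^2)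
        + 5 * ((kd \<alpha> 0 u t - kbar \<alpha> t)^2 * (kd \<alpha> 2 u t)^2)
        + 10 * kbar \<alpha> t * ((kd \<alpha> 0 u t - kbar \<alpha> t) * (kd \<alpha> 2 u t)^2)"
      unfolding GP_def
      by (rule pw_ineq[where xa="kd \<alpha> 0 u t" and xb="kd \<alpha> 1 u t" and xc="kd \<alpha> 2 u t"
            and xd="kd \<alpha> 3 u t" and lm=lam and kk="kbar \<alpha> t" and osc="osc_sup \<alpha> t"])
         (use lam o in auto)
    have sp: "speed \<alpha> u t \<ge> 0" using speed_pos[OF u t] by simp
    show ?thesis
      using mult_left_mono[OF p sp] by (simp add: kd_0 algebra_simps)
  qed
  have "I \<le> - 1/8 * lint \<alpha> (\<lambda>u r. (kd \<alpha> 3 u r)\<^sup>2) t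
         - 13/6 * kbar \<alpha> t ^ 4 * lint \<alpha> (\<lambda>u r. (kd \<alpha> 1 u r)\<^sup>2) t
         - 2 * lam * lint \<alpha> (\<lambda>u r. (kd \<alpha> 2 u r)\<^sup>2) t
         + 14 * lam * ((osc_sup \<alpha> t)\<^sup>2 + (kbar \<alpha> t)\<^sup>2) * lint \<alpha> (\<lambda>u r. (kd \<alpha> 1 u r)\<^sup>2) t
         - 22 * kbar \<alpha> t ^ 3 * lint \<alpha> (\<lambda>u r. (curv \<alpha> u r - kbar \<alpha> r) * (kd \<alpha> 1 u r)\<^sup>2) t
         + 5 * lint \<alpha> (\<lambda>u r. (curv \<alpha> u r - kbar \<alpha> r)\<^sup>2 * (kd \<alpha> 2 u r)\<^sup>2) t
         + 10 * kbar \<alpha> t * lint \<alpha> (\<lambda>u r. (curv \<alpha> u r - kbar \<alpha> r) * (kd \<alpha> 2 u r)\<^sup>2) t"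
    unfolding ID by (rule has_integral_le[OF hG hR le])
  then show ?thesis using Lr by blast
qed

end

theorem mainTheorem3:
  fixes lam \<theta>1 \<theta>2 :: real and \<alpha> :: "real \<Rightarrow> real \<Rightarrow> complex"
  assumes "lam > 0"
    and "0 \<le> \<theta>2" and "\<theta>2 < \<theta>1" and "\<theta>1 < 2 * pi"
    and "elastic_cone_flow lam \<theta>1 \<theta>2 \<alpha>"
  shows "\<forall>t\<ge>0. \<exists>D.
    ((\<lambda>s. lint \<alpha> (\<lambda>u r. (kd \<alpha> 1 u r)\<^sup>2) s) has_real_derivative D) (at t within {0..}) \<and>
    D \<le> - 1/8 * lint \<alpha> (\<lambda>u r. (kd \<alpha> 3 u r)\<^sup>2) t
         - 13/6 * kbar \<alpha> t ^ 4 * lint \<alpha> (\<lambda>u r. (kd \<alpha> 1 u r)\<^sup>2) t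
         - 2 * lam * lint \<alpha> (\<lambda>u r. (kd \<alpha> 2 u r)\<^sup>2) t
         + 14 * lam * ((osc_sup \<alpha> t)\<^sup>2 + (kbar \<alpha> t)\<^sup>2) * lint \<alpha> (\<lambda>u r. (kd \<alpha> 1 u r)\<^sup>2) t
         - 22 * kbar \<alpha> t ^ 3 * lint \<alpha> (\<lambda>u r. (curv \<alpha> u r - kbar \<alpha> r) * (kd \<alpha> 1 u r)\<^sup>2) t
         + 5 * lint \<alpha> (\<lambda>u r. (curv \<alpha> u r - kbar \<alpha> r)\<^sup>2 * (kd \<alpha> 2 u r)\<^sup>2) t
         + 10 * kbar \<alpha> t * lint \<alpha> (\<lambda>u r. (curv \<alpha> u r - kbar \<alpha> r) * (kd \<alpha> 2 u r)\<^sup>2) t"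
proof -
  interpret cflow lam \<theta>1 \<theta>2 \<alpha> by (unfold_locales) (rule assms(5))
  show ?thesis using main assms(1) by blast
qed

end
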